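(* Let $S$ be a compact strictly convex set in the plane and let $0<\alpha<\pi$. Let $q$ be the positive $x$-axis and $r$ the ray from the origin $O$ in the upper half-plane forming angle $\alpha$ with $q$. For $\theta\in[0,2\pi]$ let $S_\theta$ be the unique translate of the copy of $S$ rotated counterclockwise by angle $\theta$ such that $S_\theta$ is contained in the closed wedge bounded by $q$ and $r$ and touches both $q$ and $r$ (each of $q\cap S_\theta$ and $r\cap S_\theta$ is then a single point), let $Y(\theta)$ be the point of $r\cap S_\theta$, and let $f(\theta)=|OY(\theta)|$. Then $$\int_0^{2\pi} f(\theta)\,d\theta = \mathcal{P}(S)\,\frac{1+\cos\alpha}{\sin\alpha},$$ where $\mathcal{P}(S)$ is the perimeter of $S$.
   Context: A compact convex set in the plane is strictly convex if its boundary contains no nondegenerate line segment. *)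

theory Defs
  imports "HOL-Analysis.Analysis"
begin

text \<open>The plane is modelled as the complex plane; rotation by angle theta
  counterclockwise about the origin is multiplication by cis theta.\<close>

definition strictly_convex :: "complex set \<Rightarrow> bool" where
  "strictly_convex S \<longleftrightarrow> compact S \<and> convex S \<and>
     (\<forall>a b. a \<noteq> b \<longrightarrow> \<not> closed_segment a b \<subseteq> frontier S)"

definition ray :: "real \<Rightarrow> complex set" where
  "ray \<phi> = {complex_of_real \<rho> * cis \<phi> | \<rho>. \<rho> \<ge> 0}"

definition wedge :: "real \<Rightarrow> complex set" where
  "wedge \<alpha> = {complex_of_real a + complex_of_real b * cis \<alpha> | a b. a \<ge> 0 \<and> b \<ge> 0}"

definition placed :: "complex set \<Rightarrow> real \<Rightarrow> real \<Rightarrow> complex set" where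
  "placed S \<alpha> \<theta> = (THE T. \<exists>t. T = (\<lambda>z. t + cis \<theta> * z) ` S \<and> T \<subseteq> wedge \<alpha>
       \<and> T \<inter> ray 0 \<noteq> {} \<and> T \<inter> ray \<alpha> \<noteq> {})"

definition Ypt :: "complex set \<Rightarrow> real \<Rightarrow> real \<Rightarrow> complex" where
  "Ypt S \<alpha> \<theta> = (THE y. y \<in> placed S \<alpha> \<theta> \<inter> ray \<alpha>)"

definition fdist :: "complex set \<Rightarrow> real \<Rightarrow> real \<Rightarrow> real" where
  "fdist S \<alpha> \<theta> = norm (Ypt S \<alpha> \<theta>)"

definition curve_length :: "(real \<Rightarrow> complex) \<Rightarrow> real" where
  "curve_length g = Sup {(\<Sum>i<n. norm (g (t (Suc i)) - g (t i))) | n t.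
       t 0 = 0 \<and> t n = 1 \<and> (\<forall>i<n. t i \<le> t (Suc i))}"

text \<open>Perimeter: length of the boundary curve (a simple closed curve) of S;
  if the boundary is not a simple closed curve (S a single point) it is 0.\<close>
definition perimeter :: "complex set \<Rightarrow> real" where
  "perimeter S = (if \<exists>g. simple_path g \<and> pathfinish g = pathstart g \<and> path_image g = frontier S
     then curve_length (SOME g. simple_path g \<and> pathfinish g = pathstart g \<and> path_image g = frontier S)
     else 0)"

end

theory Submission
  imports Defs
begin

definition dd :: "complex \<Rightarrow> real \<Rightarrow> real" where
  "dd z \<phi> = Re z * cos \<phi> + Im z * sin \<phi>"

lemma dd_add: "dd (a + b) \<phi> = dd a \<phi> + dd b \<phi>"
  by (simp add: dd_def algebra_simps)
lemma dd_diff: "dd (a - b) \<phi> = dd a \<phi> - dd b \<phi>"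
  by (simp add: dd_def algebra_simps)
lemma dd_scale: "dd (complex_of_real r * a) \<phi> = r * dd a \<phi>"
  by (simp add: dd_def algebra_simps)
lemma dd_rot: "dd (cis \<theta> * w) \<phi> = dd w (\<phi> - \<theta>)"
  by (simp add: dd_def cos_diff sin_diff algebra_simps)
lemma dd_periodic: "dd z (\<phi> + 2*pi) = dd z \<phi>"
  by (simp add: dd_def)
lemma dd_cis: "dd (cis a) \<phi> = cos (\<phi> - a)"
  by (simp add: dd_def cos_diff algebra_simps)
lemma dd_le_norm: "dd z \<phi> \<le> norm z"
proof -
  have "dd z \<phi> = inner z (cis \<phi>)" by (simp add: dd_def inner_complex_def)
  also have "\<dots> \<le> norm z * norm (cis \<phi>)" by (rule norm_cauchy_schwarz)
  finally show ?thesis by simp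
qed
lemma abs_dd_le_norm: "\<bar>dd z \<phi>\<bar> \<le> norm z"
  using dd_le_norm[of z \<phi>] dd_le_norm[of "-z" \<phi>] by (simp add: dd_def)
lemma continuous_on_dd[continuous_intros]:
  "continuous_on (A::'a::t2_space set) f \<Longrightarrow> continuous_on A g \<Longrightarrow> continuous_on A (\<lambda>x. dd (f x) (g x))"
  unfolding dd_def by (auto intro!: continuous_intros)

locale sconv =
  fixes S :: "complex set"
  assumes sc: "strictly_convex S" and ne: "S \<noteq> {}"
begin

lemma cpt: "compact S" and cvx: "convex S"
  and nseg: "\<And>a b. a \<noteq> b \<Longrightarrow> \<not> closed_segment a b \<subseteq> frontier S"
  using sc by (auto simp: strictly_convex_def)

lemma max_exists: "\<exists>z\<in>S. \<forall>w\<in>S. dd w \<phi> \<le> dd z \<phi>"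
proof -
  have "continuous_on S (\<lambda>z. dd z \<phi>)" by (intro continuous_intros)
  then have "compact ((\<lambda>z. dd z \<phi>) ` S)" by (rule compact_continuous_image[OF _ cpt])
  moreover have "(\<lambda>z. dd z \<phi>) ` S \<noteq> {}" using ne by auto
  ultimately obtain m where "m \<in> (\<lambda>z. dd z \<phi>) ` S" "\<forall>y\<in>(\<lambda>z. dd z \<phi>) ` S. y \<le> m"
    using compact_attains_sup by blast
  then show ?thesis by auto
qed

lemma max_not_interior:
  assumes "p \<in> S" "\<forall>w\<in>S. dd w \<phi> \<le> dd p \<phi>"
  shows "p \<notin> interior S"
proof
  assume "p \<in> interior S"
  then obtain e where e: "e > 0" "ball p e \<subseteq> S" by (auto simp: mem_interior)
  have "dist p (p + complex_of_real (e/2) * cis \<phi>) = e/2"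
    using e by (simp add: dist_norm norm_mult)
  then have "p + complex_of_real (e/2) * cis \<phi> \<in> ball p e" using e by simp
  then have "p + complex_of_real (e/2) * cis \<phi> \<in> S" using e by auto
  with assms(2) have "dd (p + complex_of_real (e/2) * cis \<phi>) \<phi> \<le> dd p \<phi>" by blast
  moreover have "dd (p + complex_of_real (e/2) * cis \<phi>) \<phi> = dd p \<phi> + e/2"
    by (simp only: dd_add dd_scale dd_cis) simp
  ultimately show False using e by simp
qed

lemma max_frontier:
  assumes "p \<in> S" "\<forall>w\<in>S. dd w \<phi> \<le> dd p \<phi>"
  shows "p \<in> frontier S"
  using max_not_interior[OF assms] assms(1) compact_imp_closed[OF cpt]
  by (simp add: frontier_def closure_closed)

lemma max_unique:
  assumes "p \<in> S" "\<forall>w\<in>S. dd w \<phi> \<le> dd p \<phi>" "q \<in> S" "\<forall>w\<in>S. dd w \<phi> \<le> dd q \<phi>"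
  shows "p = q"
proof (rule ccontr)
  assume "p \<noteq> q"
  have pq: "dd p \<phi> = dd q \<phi>" using assms by force
  have "closed_segment p q \<subseteq> frontier S"
  proof
    fix x assume x: "x \<in> closed_segment p q"
    then obtain u where u: "0 \<le> u" "u \<le> 1" "x = (1 - u) *\<^sub>R p + u *\<^sub>R q"
      by (auto simp: closed_segment_def)
    have xS: "x \<in> S" using x cvx assms convex_contains_segment by blast
    have "dd x \<phi> = (1-u) * dd p \<phi> + u * dd q \<phi>"
      unfolding u(3) by (simp add: dd_def scaleR_conv_of_real algebra_simps)
    also have "\<dots> = dd p \<phi>" using pq by (simp add: algebra_simps)
    finally have "\<forall>w\<in>S. dd w \<phi> \<le> dd x \<phi>" using assms by auto
    then show "x \<in> frontier S" using max_frontier xS by blast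
  qed
  then show False using nseg \<open>p \<noteq> q\<close> by blast
qed

definition H :: "real \<Rightarrow> real" where
  "H \<phi> = Sup ((\<lambda>z. dd z \<phi>) ` S)"

definition s :: "real \<Rightarrow> complex" where
  "s \<phi> = (THE z. z \<in> S \<and> (\<forall>w\<in>S. dd w \<phi> \<le> dd z \<phi>))"

lemma s_prop: "s \<phi> \<in> S" "\<And>w. w \<in> S \<Longrightarrow> dd w \<phi> \<le> dd (s \<phi>) \<phi>"
proof -
  obtain z where z: "z \<in> S" "\<forall>w\<in>S. dd w \<phi> \<le> dd z \<phi>" using max_exists by blast
  have "s \<phi> = z" unfolding s_def
    by (rule the_equality) (use z max_unique in auto)
  then show "s \<phi> \<in> S" "\<And>w. w \<in> S \<Longrightarrow> dd w \<phi> \<le> dd (s \<phi>) \<phi>" using z by auto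
qed

lemma s_eq: "z \<in> S \<Longrightarrow> (\<And>w. w \<in> S \<Longrightarrow> dd w \<phi> \<le> dd z \<phi>) \<Longrightarrow> s \<phi> = z"
  using max_unique s_prop by blast

lemma H_eq: "H \<phi> = dd (s \<phi>) \<phi>"
  unfolding H_def
  by (rule cSup_eq_maximum) (use s_prop in auto)

lemma H_ge: "w \<in> S \<Longrightarrow> dd w \<phi> \<le> H \<phi>"
  using s_prop H_eq by auto

lemma s_frontier: "s \<phi> \<in> frontier S"
  using max_frontier s_prop by blast

lemma s_periodic: "s (\<phi> + 2*pi) = s \<phi>"
  by (rule s_eq) (use s_prop in \<open>auto simp: dd_periodic\<close>)

lemma H_periodic: "H (\<phi> + 2*pi) = H \<phi>"
  by (simp add: H_eq s_periodic dd_periodic)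

lemma continuous_s: "continuous_on UNIV s"
proof (rule continuous_from_closed_graph[OF cpt])
  show "s \<in> UNIV \<rightarrow> S" using s_prop by auto
  define C where "C w = {p::real\<times>complex. snd p \<in> S \<and> dd w (fst p) \<le> dd (snd p) (fst p)}" for w
  have eq: "(\<lambda>x. (x, s x)) ` UNIV = (\<Inter>w\<in>S. C w)"
  proof (intro equalityI subsetI)
    fix p assume "p \<in> (\<lambda>x. (x, s x)) ` UNIV"
    then obtain x where "p = (x, s x)" by blast
    then show "p \<in> (\<Inter>w\<in>S. C w)"
      unfolding C_def using s_prop by simp
  next
    fix p assume p: "p \<in> (\<Inter>w\<in>S. C w)"
    obtain w0 where "w0 \<in> S" using ne by auto
    then have "snd p \<in> S" using p unfolding C_def by blast
    moreover have "\<And>w. w \<in> S \<Longrightarrow> dd w (fst p) \<le> dd (snd p) (fst p)"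
      using p unfolding C_def by blast
    ultimately have "s (fst p) = snd p" by (rule s_eq)
    then show "p \<in> (\<lambda>x. (x, s x)) ` UNIV" by (metis prod.collapse rangeI)
  qed
  have "closed (C w)" for w
  proof -
    have "C w = (UNIV \<times> S) \<inter> {p. dd w (fst p) \<le> dd (snd p) (fst p)}" 
      unfolding C_def by auto
    moreover have "closed {p::real\<times>complex. dd w (fst p) \<le> dd (snd p) (fst p)}"
      by (intro closed_Collect_le continuous_on_dd continuous_on_fst continuous_on_snd continuous_on_const continuous_on_id)
    ultimately show ?thesis using closed_Times[OF closed_UNIV compact_imp_closed[OF cpt]]
      by (metis closed_Int)
  qed
  then show "closed ((\<lambda>x. (x, s x)) ` UNIV)" unfolding eq by (intro closed_INT) auto
qed

lemma continuous_H: "continuous_on UNIV H"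
proof -
  have "H = (\<lambda>\<phi>. dd (s \<phi>) \<phi>)" using H_eq by auto
  then show ?thesis using continuous_on_dd[OF continuous_s continuous_on_id] by simp
qed

definition W :: "real \<Rightarrow> real" where "W \<phi> = dd (s \<phi>) (\<phi> + pi/2)"

end

lemma dd_mhalf: "dd z (-(pi/2)) = - Im z"
  by (simp add: dd_def)

lemma dd_a2: "dd z (\<alpha> + pi/2) = Im z * cos \<alpha> - Re z * sin \<alpha>"
  by (simp add: dd_def cos_add sin_add)

lemma dd_shift_alpha: "dd z (\<phi> - \<alpha> - pi) = - (cos \<alpha> * dd z \<phi> - sin \<alpha> * dd z (\<phi> + pi/2))"
  by (simp add: dd_def cos_diff sin_diff cos_add sin_add algebra_simps)

locale sconva = sconv +
  fixes \<alpha> :: real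
  assumes a0: "0 < \<alpha>" and api: "\<alpha> < pi"
begin

lemma sina: "sin \<alpha> > 0" using a0 api sin_gt_zero by blast

lemma wedge_iff: "z \<in> wedge \<alpha> \<longleftrightarrow> dd z (-(pi/2)) \<le> 0 \<and> dd z (\<alpha> + pi/2) \<le> 0"
proof
  assume "z \<in> wedge \<alpha>"
  then obtain a b where ab: "a \<ge> 0" "b \<ge> 0" "z = complex_of_real a + complex_of_real b * cis \<alpha>"
    by (auto simp: wedge_def)
  have "Im z = b * sin \<alpha>" "Re z = a + b * cos \<alpha>" using ab by auto
  then show "dd z (-(pi/2)) \<le> 0 \<and> dd z (\<alpha> + pi/2) \<le> 0"
    using ab sina by (simp add: dd_mhalf dd_a2 algebra_simps)
next
  assume h: "dd z (-(pi/2)) \<le> 0 \<and> dd z (\<alpha> + pi/2) \<le> 0"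
  define b where "b = Im z / sin \<alpha>"
  define a where "a = Re z - b * cos \<alpha>"
  have b0: "b \<ge> 0" using h sina by (simp add: b_def dd_mhalf)
  have "a * sin \<alpha> = Re z * sin \<alpha> - Im z * cos \<alpha>"
    using sina by (simp add: a_def b_def field_simps)
  then have "a * sin \<alpha> \<ge> 0" using h by (simp add: dd_a2)
  then have a0: "a \<ge> 0" using sina by (simp add: zero_le_mult_iff)
  have "z = complex_of_real a + complex_of_real b * cis \<alpha>"
    using sina by (simp add: complex_eq_iff a_def b_def)
  then show "z \<in> wedge \<alpha>" using a0 b0 unfolding wedge_def by blast
qed

lemma ray0_iff: "z \<in> wedge \<alpha> \<Longrightarrow> z \<in> ray 0 \<longleftrightarrow> dd z (-(pi/2)) = 0"
proof -
  assume w: "z \<in> wedge \<alpha>"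
  show ?thesis
  proof
    assume "z \<in> ray 0" then show "dd z (-(pi/2)) = 0" by (auto simp: ray_def dd_mhalf)
  next
    assume "dd z (-(pi/2)) = 0"
    then have "Im z = 0" by (simp add: dd_mhalf)
    moreover have "dd z (\<alpha> + pi/2) \<le> 0" using w wedge_iff by blast
    ultimately have "Re z * sin \<alpha> \<ge> 0" by (simp add: dd_a2)
    then have "Re z \<ge> 0" using sina by (simp add: zero_le_mult_iff)
    then have "z = complex_of_real (Re z) * cis 0" using \<open>Im z = 0\<close> by (simp add: complex_eq_iff)
    then show "z \<in> ray 0" unfolding ray_def using \<open>Re z \<ge> 0\<close> by blast
  qed
qed

lemma raya_iff: "z \<in> wedge \<alpha> \<Longrightarrow> z \<in> ray \<alpha> \<longleftrightarrow> dd z (\<alpha> + pi/2) = 0"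
proof -
  assume w: "z \<in> wedge \<alpha>"
  show ?thesis
  proof
    assume "z \<in> ray \<alpha>" then show "dd z (\<alpha> + pi/2) = 0" by (auto simp: ray_def dd_a2)
  next
    assume h: "dd z (\<alpha> + pi/2) = 0"
    have "Im z \<ge> 0" using w wedge_iff by (simp add: dd_mhalf)
    define r where "r = Im z / sin \<alpha>"
    have "r \<ge> 0" using \<open>Im z \<ge> 0\<close> sina by (simp add: r_def)
    have "Im z * cos \<alpha> = Re z * sin \<alpha>" using h by (simp add: dd_a2)
    then have "z = complex_of_real r * cis \<alpha>"
      using sina by (simp add: complex_eq_iff r_def field_simps)
    then show "z \<in> ray \<alpha>" unfolding ray_def using \<open>r \<ge> 0\<close> by blast
  qed
qed

lemma ray_wedge: "ray \<alpha> \<subseteq> wedge \<alpha>" "ray 0 \<subseteq> wedge \<alpha>"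
  unfolding ray_def wedge_def by force+

definition tt :: "real \<Rightarrow> complex" where
  "tt \<theta> = Complex ((H (\<alpha> + pi/2 - \<theta>) + H (-(pi/2) - \<theta>) * cos \<alpha>) / sin \<alpha>) (H (-(pi/2) - \<theta>))"

lemma tt_dd1: "dd (tt \<theta>) (-(pi/2)) = - H (-(pi/2) - \<theta>)"
  by (simp add: tt_def dd_mhalf)

lemma tt_dd2: "dd (tt \<theta>) (\<alpha> + pi/2) = - H (\<alpha> + pi/2 - \<theta>)"
  using sina unfolding dd_a2 by (simp add: tt_def field_simps)

lemma dd_img: "dd (t + cis \<theta> * w) a = dd t a + dd w (a - \<theta>)"
  by (simp add: dd_add dd_rot)

lemma img_wedge_iff:
  "(\<lambda>z. t + cis \<theta> * z) ` S \<subseteq> wedge \<alpha> \<longleftrightarrow>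
     dd t (-(pi/2)) + H (-(pi/2) - \<theta>) \<le> 0 \<and> dd t (\<alpha> + pi/2) + H (\<alpha> + pi/2 - \<theta>) \<le> 0"
proof
  assume h: "(\<lambda>z. t + cis \<theta> * z) ` S \<subseteq> wedge \<alpha>"
  have "t + cis \<theta> * s (-(pi/2) - \<theta>) \<in> wedge \<alpha>" "t + cis \<theta> * s (\<alpha> + pi/2 - \<theta>) \<in> wedge \<alpha>"
    using h s_prop(1) by auto
  then show "dd t (-(pi/2)) + H (-(pi/2) - \<theta>) \<le> 0 \<and> dd t (\<alpha> + pi/2) + H (\<alpha> + pi/2 - \<theta>) \<le> 0"
    unfolding wedge_iff dd_img H_eq by simp
next
  assume h: "dd t (-(pi/2)) + H (-(pi/2) - \<theta>) \<le> 0 \<and> dd t (\<alpha> + pi/2) + H (\<alpha> + pi/2 - \<theta>) \<le> 0"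
  show "(\<lambda>z. t + cis \<theta> * z) ` S \<subseteq> wedge \<alpha>"
  proof
    fix y assume "y \<in> (\<lambda>z. t + cis \<theta> * z) ` S"
    then obtain w where w: "w \<in> S" "y = t + cis \<theta> * w" by blast
    have "dd w (-(pi/2) - \<theta>) \<le> H (-(pi/2) - \<theta>)" "dd w (\<alpha> + pi/2 - \<theta>) \<le> H (\<alpha> + pi/2 - \<theta>)"
      using H_ge w by auto
    then show "y \<in> wedge \<alpha>" unfolding wedge_iff w(2) dd_img using h by simp
  qed
qed

lemma placed_eq: "placed S \<alpha> \<theta> = (\<lambda>z. tt \<theta> + cis \<theta> * z) ` S"
  unfolding placed_def
proof (rule the_equality)
  let ?T = "(\<lambda>z. tt \<theta> + cis \<theta> * z) ` S"
  have W: "?T \<subseteq> wedge \<alpha>" unfolding img_wedge_iff by (simp add: tt_dd1 tt_dd2)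
  have p1: "tt \<theta> + cis \<theta> * s (-(pi/2) - \<theta>) \<in> ?T" "tt \<theta> + cis \<theta> * s (\<alpha> + pi/2 - \<theta>) \<in> ?T"
    using s_prop(1) by auto
  have "tt \<theta> + cis \<theta> * s (-(pi/2) - \<theta>) \<in> ray 0"
    using p1 W by (subst ray0_iff) (auto simp: dd_img tt_dd1 H_eq)
  moreover have "tt \<theta> + cis \<theta> * s (\<alpha> + pi/2 - \<theta>) \<in> ray \<alpha>"
    using p1 W by (subst raya_iff) (auto simp: dd_img tt_dd2 H_eq)
  ultimately show "\<exists>t. ?T = (\<lambda>z. t + cis \<theta> * z) ` S \<and> ?T \<subseteq> wedge \<alpha> \<and> ?T \<inter> ray 0 \<noteq> {} \<and> ?T \<inter> ray \<alpha> \<noteq> {}"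
    using W p1 by blast
next
  fix T assume "\<exists>t. T = (\<lambda>z. t + cis \<theta> * z) ` S \<and> T \<subseteq> wedge \<alpha> \<and> T \<inter> ray 0 \<noteq> {} \<and> T \<inter> ray \<alpha> \<noteq> {}"
  then obtain t where t: "T = (\<lambda>z. t + cis \<theta> * z) ` S" "T \<subseteq> wedge \<alpha>" "T \<inter> ray 0 \<noteq> {}" "T \<inter> ray \<alpha> \<noteq> {}"
    by blast
  have le: "dd t (-(pi/2)) + H (-(pi/2) - \<theta>) \<le> 0" "dd t (\<alpha> + pi/2) + H (\<alpha> + pi/2 - \<theta>) \<le> 0"
    using t(1,2) img_wedge_iff by auto
  obtain y1 where y1: "y1 \<in> T" "y1 \<in> ray 0" using t(3) by blast
  obtain w1 where w1: "w1 \<in> S" "y1 = t + cis \<theta> * w1" using y1 t(1) by blast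
  have "dd y1 (-(pi/2)) = 0" using y1 t(2) ray0_iff by blast
  then have "dd t (-(pi/2)) + dd w1 (-(pi/2) - \<theta>) = 0" using w1 by (simp add: dd_img)
  moreover have "dd w1 (-(pi/2) - \<theta>) \<le> H (-(pi/2) - \<theta>)" using H_ge w1 by blast
  ultimately have e1: "dd t (-(pi/2)) = - H (-(pi/2) - \<theta>)" using le by linarith
  obtain y2 where y2: "y2 \<in> T" "y2 \<in> ray \<alpha>" using t(4) by blast
  obtain w2 where w2: "w2 \<in> S" "y2 = t + cis \<theta> * w2" using y2 t(1) by blast
  have "dd y2 (\<alpha> + pi/2) = 0" using y2 t(2) raya_iff by blast
  then have "dd t (\<alpha> + pi/2) + dd w2 (\<alpha> + pi/2 - \<theta>) = 0" using w2 by (simp add: dd_img)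
  moreover have "dd w2 (\<alpha> + pi/2 - \<theta>) \<le> H (\<alpha> + pi/2 - \<theta>)" using H_ge w2 by blast
  ultimately have e2: "dd t (\<alpha> + pi/2) = - H (\<alpha> + pi/2 - \<theta>)" using le by linarith
  have "Im t = Im (tt \<theta>)" using e1 tt_dd1[of \<theta>] by (simp add: dd_mhalf)
  moreover have "Re t * sin \<alpha> = Re (tt \<theta>) * sin \<alpha>"
  proof -
    have "Im t * cos \<alpha> = Im (tt \<theta>) * cos \<alpha>" using \<open>Im t = Im (tt \<theta>)\<close> by simp
    then show ?thesis using e2 tt_dd2[of \<theta>] unfolding dd_a2 by linarith
  qed
  then have "Re t = Re (tt \<theta>)" using sina by simp
  ultimately have "t = tt \<theta>" by (simp add: complex_eq_iff)
  then show "T = (\<lambda>z. tt \<theta> + cis \<theta> * z) ` S" using t(1) by simp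
qed

lemma Y_ray: "tt \<theta> + cis \<theta> * s (\<alpha> + pi/2 - \<theta>) \<in> ray \<alpha>"
proof -
  let ?T = "(\<lambda>z. tt \<theta> + cis \<theta> * z) ` S"
  have W: "?T \<subseteq> wedge \<alpha>" unfolding img_wedge_iff by (simp add: tt_dd1 tt_dd2)
  have p1: "tt \<theta> + cis \<theta> * s (\<alpha> + pi/2 - \<theta>) \<in> ?T" using s_prop(1) by auto
  show ?thesis
    using p1 W by (subst raya_iff) (auto simp: dd_img tt_dd2 H_eq)
qed

lemma Ypt_eq: "Ypt S \<alpha> \<theta> = tt \<theta> + cis \<theta> * s (\<alpha> + pi/2 - \<theta>)"
  unfolding Ypt_def
proof (rule the_equality)
  let ?T = "(\<lambda>z. tt \<theta> + cis \<theta> * z) ` S"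
  have W: "?T \<subseteq> wedge \<alpha>" unfolding img_wedge_iff by (simp add: tt_dd1 tt_dd2)
  have p1: "tt \<theta> + cis \<theta> * s (\<alpha> + pi/2 - \<theta>) \<in> ?T" using s_prop(1) by auto
  have "tt \<theta> + cis \<theta> * s (\<alpha> + pi/2 - \<theta>) \<in> ray \<alpha>"
    using p1 W by (subst raya_iff) (auto simp: dd_img tt_dd2 H_eq)
  then show "tt \<theta> + cis \<theta> * s (\<alpha> + pi/2 - \<theta>) \<in> placed S \<alpha> \<theta> \<inter> ray \<alpha>"
    using p1 placed_eq by auto
next
  fix y assume y: "y \<in> placed S \<alpha> \<theta> \<inter> ray \<alpha>"
  then obtain w where w: "w \<in> S" "y = tt \<theta> + cis \<theta> * w" using placed_eq by auto
  have W: "(\<lambda>z. tt \<theta> + cis \<theta> * z) ` S \<subseteq> wedge \<alpha>" unfolding img_wedge_iff by (simp add: tt_dd1 tt_dd2)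
  have "y \<in> wedge \<alpha>" using W w by auto
  then have "dd y (\<alpha> + pi/2) = 0" using y raya_iff by blast
  then have "dd w (\<alpha> + pi/2 - \<theta>) = H (\<alpha> + pi/2 - \<theta>)" using w by (simp add: dd_img tt_dd2)
  then have "s (\<alpha> + pi/2 - \<theta>) = w" using w(1) H_ge by (intro s_eq) auto
  then show "y = tt \<theta> + cis \<theta> * s (\<alpha> + pi/2 - \<theta>)" using w by simp
qed


lemma fdist_eq:
  "fdist S \<alpha> \<theta> = (H (-(pi/2) - \<theta>) + cos \<alpha> * H (\<alpha> + pi/2 - \<theta>)) / sin \<alpha> - W (\<alpha> + pi/2 - \<theta>)"
proof -
  define \<phi> where "\<phi> = \<alpha> + pi/2 - \<theta>"
  define Y where "Y = tt \<theta> + cis \<theta> * s \<phi>"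
  have fY: "fdist S \<alpha> \<theta> = norm Y" unfolding fdist_def Ypt_eq Y_def \<phi>_def ..
  obtain r where r: "r \<ge> 0" "Y = complex_of_real r * cis \<alpha>"
    using Y_ray[of \<theta>] unfolding Y_def \<phi>_def ray_def by blast
  have nY: "norm Y = Im Y / sin \<alpha>" using r sina by (simp add: norm_mult)
  have "Im Y = - dd Y (-(pi/2))" by (simp add: dd_mhalf)
  also have "\<dots> = H (-(pi/2) - \<theta>) - dd (s \<phi>) (-(pi/2) - \<theta>)"
    unfolding Y_def dd_img tt_dd1 by simp
  also have "dd (s \<phi>) (-(pi/2) - \<theta>) = dd (s \<phi>) (\<phi> - \<alpha> - pi)" by (simp add: \<phi>_def)
  finally have "Im Y = H (-(pi/2) - \<theta>) + cos \<alpha> * H \<phi> - sin \<alpha> * W \<phi>"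
    unfolding dd_shift_alpha W_def H_eq[of \<phi>] by (simp add: \<phi>_def)
  then show ?thesis unfolding fY nY using sina by (simp add: field_simps \<phi>_def)
qed

end

lemma periodic_int:
  assumes per: "\<And>x. f (x + 2*pi) = (f x :: real)"
  shows "f (x + 2*pi*real_of_int k) = f x"
proof -
  have nat: "f (y + 2*pi*real n) = f y" for y n
  proof (induction n)
    case 0 then show ?case by simp
  next
    case (Suc n)
    have "y + 2*pi*real (Suc n) = (y + 2*pi*real n) + 2*pi" by (simp add: algebra_simps)
    then have "f (y + 2*pi*real (Suc n)) = f (y + 2*pi*real n)" using per by presburger
    then show ?case using Suc by simp
  qed
  show ?thesis
  proof (cases "k \<ge> 0")
    case True
    define n where "n = nat k"
    have "k = int n" using True by (simp add: n_def)
    then show ?thesis using nat[of x n] by simp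
  next
    case False
    define n where "n = nat (- k)"
    have n: "k = - int n" using False by (simp add: n_def)
    have "f (x + 2*pi*real_of_int k + 2*pi*real n) = f (x + 2*pi*real_of_int k)" by (rule nat)
    then show ?thesis using n by (simp add: algebra_simps)
  qed
qed

lemma period_has_integral_base:
  fixes f :: "real \<Rightarrow> real"
  assumes cont: "continuous_on UNIV f" and per: "\<And>x. f (x + 2*pi) = f x"
    and a: "0 \<le> a" "a \<le> 2*pi"
  shows "integral {a..a+2*pi} f = integral {0..2*pi} f"
proof -
  have int: "f integrable_on {u..v}" for u v
    by (rule integrable_continuous_real) (rule continuous_on_subset[OF cont], simp)
  have "integral {a..a+2*pi} f = integral {a..2*pi} f + integral {2*pi..a+2*pi} f"
    using Henstock_Kurzweil_Integration.integral_combine[where a=a and c="2*pi" and b="a+2*pi" and f=f] a int by simp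
  also have "integral {2*pi..a+2*pi} f = integral {0..a} f"
  proof -
    have "integral (cbox (2*pi - 2*pi) (a + 2*pi - 2*pi)) (\<lambda>x. f (x + 2*pi)) = integral (cbox (2*pi) (a+2*pi)) f"
      by (rule integral_shift_cbox)
    then show ?thesis using per by simp
  qed
  also have "integral {a..2*pi} f + integral {0..a} f = integral {0..2*pi} f"
    using Henstock_Kurzweil_Integration.integral_combine[where a=0 and c=a and b="2*pi" and f=f] a int by simp
  finally show ?thesis .
qed

lemma period_integral:
  fixes f :: "real \<Rightarrow> real"
  assumes cont: "continuous_on UNIV f" and per: "\<And>x. f (x + 2*pi) = f x"
  shows "integral {a..a+2*pi} f = integral {0..2*pi} f"
proof -
  define k where "k = \<lfloor>a / (2*pi)\<rfloor>"
  define a' where "a' = a - 2*pi*real_of_int k"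
  have k1: "real_of_int k \<le> a / (2*pi)" "a / (2*pi) < real_of_int k + 1"
    unfolding k_def by linarith+
  have a'0: "0 \<le> a'" using k1(1) pi_gt_zero by (simp add: a'_def field_simps)
  have a'1: "a' \<le> 2*pi" using k1(2) pi_gt_zero by (simp add: a'_def field_simps)
  have "integral (cbox (a - 2*pi*real_of_int k) (a + 2*pi - 2*pi*real_of_int k)) (\<lambda>x. f (x + 2*pi*real_of_int k))
        = integral (cbox a (a+2*pi)) f"
    by (rule integral_shift_cbox)
  moreover have "(\<lambda>x. f (x + 2*pi*real_of_int k)) = f" using periodic_int[of f, OF per] by auto
  ultimately have "integral {a..a+2*pi} f = integral {a'..a'+2*pi} f"
    by (simp add: a'_def algebra_simps)
  also have "\<dots> = integral {0..2*pi} f" by (rule period_has_integral_base[OF cont per a'0 a'1])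
  finally show ?thesis .
qed

lemma period_has_integral:
  fixes f :: "real \<Rightarrow> real"
  assumes cont: "continuous_on UNIV f" and per: "\<And>x. f (x + 2*pi) = f x"
  shows "(f has_integral integral {0..2*pi} f) {a..a+2*pi}"
proof -
  have "f integrable_on {a..a+2*pi}"
    by (rule integrable_continuous_real) (rule continuous_on_subset[OF cont], simp)
  then show ?thesis using period_integral[OF cont per] by (metis has_integral_integral)
qed

lemma reflect_period_has_integral:
  fixes f :: "real \<Rightarrow> real"
  assumes cont: "continuous_on UNIV f" and per: "\<And>x. f (x + 2*pi) = f x"
  shows "((\<lambda>\<theta>. f (c - \<theta>)) has_integral integral {0..2*pi} f) {0..2*pi}"
proof -
  have "(f has_integral integral {0..2*pi} f) {(c - 2*pi)..(c-2*pi)+2*pi}"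
    by (rule period_has_integral[OF cont per])
  then have "((\<lambda>x. f (x + c)) has_integral integral {0..2*pi} f) {(c - 2*pi) - c..(c-2*pi)+2*pi - c}"
    by (rule has_integral_shift_real_ivl)
  then have "((\<lambda>x. f (x + c)) has_integral integral {0..2*pi} f) {-(2*pi)..0}" by simp
  then have "((\<lambda>x. (\<lambda>x. f (x + c)) (-x)) has_integral integral {0..2*pi} f) {-0..-(-(2*pi))}"
    using has_integral_reflect_real[where f="\<lambda>x. f (x + c)" and i="integral {0..2*pi} f" and a="-(2*pi)" and b=0] by simp
  then show ?thesis by (simp add: algebra_simps)
qed

context sconv
begin


lemma continuous_W: "continuous_on UNIV W"
proof -
  have "W = (\<lambda>\<phi>. dd (s \<phi>) (\<phi> + pi/2))" by (auto simp: W_def)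
  moreover have "continuous_on UNIV (\<lambda>\<phi>::real. \<phi> + pi/2)" by (intro continuous_intros)
  ultimately show ?thesis using continuous_on_dd[OF continuous_s] by simp
qed

lemma W_periodic: "W (\<phi> + 2*pi) = W \<phi>"
proof -
  have "\<phi> + 2*pi + pi/2 = (\<phi> + pi/2) + 2*pi" by simp
  then show ?thesis unfolding W_def s_periodic by (simp only: dd_periodic)
qed

lemma dq_limit:
  assumes "(z \<longlongrightarrow> z0) (at (0::real))"
  shows "((\<lambda>h. (dd (z h) (\<phi> + h) - dd (z h) \<phi>) / h) \<longlongrightarrow> dd z0 (\<phi> + pi/2)) (at 0)"
proof -
  have c: "((\<lambda>h. (cos (\<phi> + h) - cos \<phi>) / h) \<longlongrightarrow> - sin \<phi>) (at 0)"
    using DERIV_cos[of \<phi>] by (simp add: DERIV_def)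
  have si: "((\<lambda>h. (sin (\<phi> + h) - sin \<phi>) / h) \<longlongrightarrow> cos \<phi>) (at 0)"
    using DERIV_sin[of \<phi>] by (simp add: DERIV_def)
  have eq: "(dd (z h) (\<phi> + h) - dd (z h) \<phi>) / h =
     Re (z h) * ((cos (\<phi> + h) - cos \<phi>) / h) + Im (z h) * ((sin (\<phi> + h) - sin \<phi>) / h)" for h
    by (simp add: dd_def diff_divide_distrib algebra_simps add_divide_distrib)
  have "((\<lambda>h. Re (z h) * ((cos (\<phi> + h) - cos \<phi>) / h) + Im (z h) * ((sin (\<phi> + h) - sin \<phi>) / h))
        \<longlongrightarrow> Re z0 * (- sin \<phi>) + Im z0 * cos \<phi>) (at 0)"
    by (intro tendsto_intros c si assms)
  moreover have "Re z0 * (- sin \<phi>) + Im z0 * cos \<phi> = dd z0 (\<phi> + pi/2)"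
    by (simp add: dd_def cos_add sin_add)
  ultimately show ?thesis unfolding eq by simp
qed

lemma H_deriv: "(H has_real_derivative W \<phi>) (at \<phi>)"
  unfolding DERIV_def
proof (rule real_tendsto_sandwich)
  define A where "A h = (dd (s \<phi>) (\<phi> + h) - dd (s \<phi>) \<phi>) / h" for h
  define B where "B h = (dd (s (\<phi> + h)) (\<phi> + h) - dd (s (\<phi> + h)) \<phi>) / h" for h
  have bnd: "min (A h) (B h) \<le> (H (\<phi> + h) - H \<phi>) / h \<and> (H (\<phi> + h) - H \<phi>) / h \<le> max (A h) (B h)" for h
  proof -
    have l: "dd (s \<phi>) (\<phi> + h) - dd (s \<phi>) \<phi> \<le> H (\<phi> + h) - H \<phi>"
      using H_ge[OF s_prop(1)[of \<phi>], of "\<phi>+h"] H_eq[of \<phi>] by simp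
    have u: "H (\<phi> + h) - H \<phi> \<le> dd (s (\<phi> + h)) (\<phi> + h) - dd (s (\<phi> + h)) \<phi>"
      using H_ge[OF s_prop(1)[of "\<phi>+h"], of "\<phi>"] H_eq[of "\<phi>+h"] by simp
    consider "h > 0" | "h = 0" | "h < 0" by linarith
    then show ?thesis
    proof cases
      case 1
      then have "A h \<le> (H (\<phi> + h) - H \<phi>) / h" "(H (\<phi> + h) - H \<phi>) / h \<le> B h"
        using l u by (simp_all add: A_def B_def divide_right_mono)
      then show ?thesis by linarith
    next
      case 2 then show ?thesis by (simp add: A_def B_def)
    next
      case 3
      then have "B h \<le> (H (\<phi> + h) - H \<phi>) / h" "(H (\<phi> + h) - H \<phi>) / h \<le> A h"
        using l u by (simp_all add: A_def B_def divide_right_mono_neg)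
      then show ?thesis by linarith
    qed
  qed
  show "\<forall>\<^sub>F h in at 0. min (A h) (B h) \<le> (H (\<phi> + h) - H \<phi>) / h" using bnd by simp
  show "\<forall>\<^sub>F h in at 0. (H (\<phi> + h) - H \<phi>) / h \<le> max (A h) (B h)" using bnd by simp
  have sA: "A \<midarrow>0\<rightarrow> W \<phi>" unfolding A_def W_def by (rule dq_limit) simp
  have "isCont s \<phi>" using continuous_s by (simp add: continuous_on_eq_continuous_at)
  then have "(\<lambda>h. s (\<phi> + h)) \<midarrow>0\<rightarrow> s \<phi>" by (intro LIM_offset_zero) (simp add: isCont_def)
  then have sB: "B \<midarrow>0\<rightarrow> W \<phi>" unfolding B_def W_def by (rule dq_limit)
  show "((\<lambda>h. min (A h) (B h)) \<longlongrightarrow> W \<phi>) (at 0)" using tendsto_min[OF sA sB] by simp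
  show "((\<lambda>h. max (A h) (B h)) \<longlongrightarrow> W \<phi>) (at 0)" using tendsto_max[OF sA sB] by simp
qed

lemma W_integral: "(W has_integral 0) {0..2*pi}"
proof -
  have "(W has_integral (H (2*pi) - H 0)) {0..2*pi}"
    by (rule fundamental_theorem_of_calculus)
       (auto intro!: has_field_derivative_at_within[OF H_deriv] simp: has_real_derivative_iff_has_vector_derivative[symmetric])
  moreover have "H (2*pi) = H 0" using H_periodic[of 0] by simp
  ultimately show ?thesis by simp
qed

definition I :: real where "I = integral {0..2*pi} H"

end

context sconva
begin

lemma fdist_integral: "(fdist S \<alpha> has_integral I * (1 + cos \<alpha>) / sin \<alpha>) {0..2*pi}"
proof -
  have f: "fdist S \<alpha> = (\<lambda>\<theta>. (H (-(pi/2) - \<theta>) + cos \<alpha> * H (\<alpha> + pi/2 - \<theta>)) / sin \<alpha> - W (\<alpha> + pi/2 - \<theta>))"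
    using fdist_eq by (auto simp: fun_eq_iff)
  have h1: "((\<lambda>\<theta>. H (-(pi/2) - \<theta>)) has_integral I) {0..2*pi}"
    unfolding I_def by (rule reflect_period_has_integral[OF continuous_H H_periodic])
  have h2: "((\<lambda>\<theta>. H (\<alpha> + pi/2 - \<theta>)) has_integral I) {0..2*pi}"
    unfolding I_def by (rule reflect_period_has_integral[OF continuous_H H_periodic])
  have w: "((\<lambda>\<theta>. W (\<alpha> + pi/2 - \<theta>)) has_integral 0) {0..2*pi}"
    using reflect_period_has_integral[OF continuous_W W_periodic] W_integral
    by (metis integral_unique)
  have hint: "((\<lambda>\<theta>. (H (-(pi/2) - \<theta>) + cos \<alpha> * H (\<alpha> + pi/2 - \<theta>)) / sin \<alpha> - W (\<alpha> + pi/2 - \<theta>))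
      has_integral (I + cos \<alpha> * I) / sin \<alpha> - 0) {0..2*pi}"
    by (intro has_integral_diff has_integral_divide has_integral_add has_integral_mult_right h1 h2 w)
  have eqv: "I * (1 + cos \<alpha>) / sin \<alpha> = (I + cos \<alpha> * I) / sin \<alpha> - 0"
    by (simp add: algebra_simps)
  show ?thesis unfolding f eqv by (rule hint)
qed

end

lemma dd_has_integral:
  assumes "a \<le> m"
  shows "((\<lambda>\<phi>. dd z \<phi>) has_integral (dd z (a + pi/2) - dd z (m + pi/2))) {a..m}"
proof -
  have "((\<lambda>\<phi>. dd z \<phi>) has_integral ((Re z * sin m - Im z * cos m) - (Re z * sin a - Im z * cos a))) {a..m}"
  proof (rule fundamental_theorem_of_calculus[OF assms])
    fix x assume "x \<in> {a..m}"
    have "((\<lambda>\<phi>. Re z * sin \<phi> - Im z * cos \<phi>) has_real_derivative (Re z * cos x - Im z * (- sin x))) (at x)"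
      by (intro derivative_eq_intros) auto
    then show "((\<lambda>\<phi>. Re z * sin \<phi> - Im z * cos \<phi>) has_vector_derivative dd z x) (at x within {a..m})"
      by (simp add: dd_def has_real_derivative_iff_has_vector_derivative[symmetric] has_field_derivative_at_within)
  qed
  moreover have "(Re z * sin m - Im z * cos m) - (Re z * sin a - Im z * cos a) = dd z (a + pi/2) - dd z (m + pi/2)"
    by (simp add: dd_def cos_add sin_add)
  ultimately show ?thesis by simp
qed

lemma sin1_has_integral:
  fixes a b :: real
  assumes "a \<le> b"
  shows "((\<lambda>\<phi>. sin (b - \<phi>)) has_integral (1 - cos (b - a))) {a..b}"
proof -
  have "((\<lambda>\<phi>. sin (b - \<phi>)) has_integral (cos (b - b) - cos (b - a))) {a..b}"
  proof (rule fundamental_theorem_of_calculus[OF assms])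
    fix x assume "x \<in> {a..b}"
    have "((\<lambda>\<phi>. cos (b - \<phi>)) has_real_derivative (- sin (b - x) * (0 - 1))) (at x)"
      by (intro derivative_eq_intros) auto
    then show "((\<lambda>\<phi>. cos (b - \<phi>)) has_vector_derivative sin (b - x)) (at x within {a..b})"
      by (simp add: has_real_derivative_iff_has_vector_derivative[symmetric] has_field_derivative_at_within)
  qed
  then show ?thesis by simp
qed

lemma sin2_has_integral:
  fixes a b :: real
  assumes "a \<le> b"
  shows "((\<lambda>\<phi>. sin (\<phi> - a)) has_integral (1 - cos (b - a))) {a..b}"
proof -
  have "((\<lambda>\<phi>. sin (\<phi> - a)) has_integral ((- cos (b - a)) - (- cos (a - a)))) {a..b}"
  proof (rule fundamental_theorem_of_calculus[OF assms])
    fix x assume "x \<in> {a..b}"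
    have "((\<lambda>\<phi>. - cos (\<phi> - a)) has_real_derivative (- (- sin (x - a) * (1 - 0)))) (at x)"
      by (intro derivative_eq_intros) auto
    then show "((\<lambda>\<phi>. - cos (\<phi> - a)) has_vector_derivative sin (x - a)) (at x within {a..b})"
      by (simp add: has_real_derivative_iff_has_vector_derivative[symmetric] has_field_derivative_at_within)
  qed
  then show ?thesis by simp
qed

context sconv
begin

lemma H_integrable: "H integrable_on {a..b}"
  by (rule integrable_continuous_real) (rule continuous_on_subset[OF continuous_H], simp)

definition ell :: "real \<Rightarrow> real \<Rightarrow> real" where
  "ell a b = W b - W a + integral {a..b} H"

lemma ell_add: "a \<le> c \<Longrightarrow> c \<le> b \<Longrightarrow> ell a c + ell c b = ell a b"
  unfolding ell_def
  using Henstock_Kurzweil_Integration.integral_combine[where a=a and c=c and b=b and f=H] H_integrable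
  by simp

lemma dd_le_H: "dd (s b) a \<le> H a"
  using H_ge s_prop(1) by blast

lemma ell_ge_dd:
  assumes "a \<le> m" "m \<le> b"
  shows "dd (s b - s a) (m + pi/2) \<le> ell a b"
proof -
  have i1: "integral {a..m} (\<lambda>\<phi>. dd (s a) \<phi>) \<le> integral {a..m} H"
    by (rule integral_le) (use dd_has_integral[OF assms(1)] H_integrable dd_le_H in auto)
  have i2: "integral {m..b} (\<lambda>\<phi>. dd (s b) \<phi>) \<le> integral {m..b} H"
    by (rule integral_le) (use dd_has_integral[OF assms(2)] H_integrable dd_le_H in auto)
  have e1: "integral {a..m} (\<lambda>\<phi>. dd (s a) \<phi>) = dd (s a) (a + pi/2) - dd (s a) (m + pi/2)"
    using dd_has_integral[OF assms(1)] by (rule integral_unique)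
  have e2: "integral {m..b} (\<lambda>\<phi>. dd (s b) \<phi>) = dd (s b) (m + pi/2) - dd (s b) (b + pi/2)"
    using dd_has_integral[OF assms(2)] by (rule integral_unique)
  have "integral {a..b} H = integral {a..m} H + integral {m..b} H"
    using Henstock_Kurzweil_Integration.integral_combine[where a=a and c=m and b=b and f=H] H_integrable assms
    by simp
  then show ?thesis using i1 i2 e1 e2 unfolding ell_def W_def dd_diff by linarith
qed

lemma chord_le_small:
  assumes ab: "a \<le> b" "b \<le> a + pi"
  shows "norm (s b - s a) \<le> ell a b"
proof (cases "s b = s a")
  case True
  then show ?thesis using ell_ge_dd[of a a b] ab by (simp add: dd_def)
next
  case False
  define d where "d = s b - s a"
  have nd: "norm d > 0" using False by (simp add: d_def)
  define u where "u = d * cis (-a) * (- \<i>) / complex_of_real (norm d)"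
  have "norm u = 1" using nd by (simp add: u_def norm_mult norm_divide)
  then have "(Re u)\<^sup>2 + (Im u)\<^sup>2 = 1" by (simp add: cmod_def)
  then obtain x where x: "0 \<le> x" "x < 2*pi" "Re u = cos x" "Im u = sin x"
    using sincos_total_2pi by metis
  have ux: "u = cis x" using x by (simp add: complex_eq_iff)
  have "complex_of_real (norm d) * \<i> * cis a * u = d * (cis a * cis (-a)) * (\<i> * (- \<i>))"
    using nd unfolding u_def by (simp add: field_simps)
  also have "\<dots> = d" by (simp add: cis_mult)
  finally have "d = complex_of_real (norm d) * \<i> * cis (a + x)"
    unfolding ux by (simp add: cis_mult[symmetric] mult.assoc)
  moreover define r where "r = norm d"
  ultimately have deq: "d = complex_of_real r * \<i> * cis (a + x)" by simp
  have ddd0: "dd d \<phi> = r * sin (\<phi> - (a + x))" for \<phi>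
    unfolding deq by (simp add: dd_def cos_diff sin_diff algebra_simps)
  have ddd: "dd d \<phi> = norm d * sin (\<phi> - (a + x))" for \<phi>
    using ddd0 by (simp add: r_def)
  have "dd d a \<le> 0" using dd_le_H[of b a] H_eq[of a] by (simp add: d_def dd_diff)
  then have "norm d * sin (- x) \<le> 0" using ddd[of a] by simp
  then have "sin (-x) \<le> 0"
  proof (rule contrapos_pp)
    assume "\<not> sin (-x) \<le> 0"
    then have "norm d * sin (-x) > 0" using nd by (intro mult_pos_pos) auto
    then show "\<not> norm d * sin (- x) \<le> 0" by linarith
  qed
  then have "sin x \<ge> 0" by simp
  then have xpi: "x \<le> pi" using x sin_lt_zero[of x] by force
  have "dd d b \<ge> 0" using dd_le_H[of a b] H_eq[of b] by (simp add: d_def dd_diff)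
  then have "norm d * sin (b - (a + x)) \<ge> 0" using ddd[of b] by simp
  then have sb: "sin (b - (a + x)) \<ge> 0" using nd mult_pos_neg[of "norm d" "sin (b - (a + x))"] by linarith
  have "a + x \<le> b"
  proof (rule ccontr)
    assume "\<not> a + x \<le> b"
    define y where "y = b - (a + x)"
    have y: "y < 0" "- pi \<le> y" using \<open>\<not> a + x \<le> b\<close> xpi ab by (auto simp: y_def)
    show False
    proof (cases "y = - pi")
      case True
      then have "b = a" using xpi ab x by (simp add: y_def)
      then show False using False by simp
    next
      case False
      then have "sin (- y) > 0" using y by (intro sin_gt_zero) auto
      moreover have "sin (- y) = - sin (b - (a + x))" unfolding y_def by (rule sin_minus)
      ultimately show False using sb by linarith
    qed
  qed
  then have "dd d (a + x + pi/2) \<le> ell a b" unfolding d_def using x(1) by (intro ell_ge_dd) auto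
  then show ?thesis using ddd[of "a + x + pi/2"] by (simp add: d_def)
qed

lemma chord_le:
  assumes ab: "a \<le> b" "b \<le> a + 2*pi"
  shows "norm (s b - s a) \<le> ell a b"
proof -
  define c where "c = (a + b) / 2"
  have c: "a \<le> c" "c \<le> b" "c \<le> a + pi" "b \<le> c + pi" using ab by (simp_all add: c_def field_simps)
  have "norm (s b - s a) \<le> norm (s c - s a) + norm (s b - s c)"
    using norm_triangle_ineq[of "s c - s a" "s b - s c"] by simp
  also have "\<dots> \<le> ell a c + ell c b" using chord_le_small c by (intro add_mono) auto
  also have "\<dots> = ell a b" using ell_add c by simp
  finally show ?thesis .
qed

lemma dd_plus_half: "dd z (x + pi/2) = - Re z * sin x + Im z * cos x"
  by (simp add: dd_def cos_add sin_add)

lemma mid_identities: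
  "cos h * dd z (m + h + pi/2) + sin h * dd z (m + h) = dd z (m + pi/2)"
  "cos h * dd z (m - h + pi/2) - sin h * dd z (m - h) = dd z (m + pi/2)"
proof -
  have e1: "sin (m+h) * cos h - cos (m+h) * sin h = sin m" using sin_diff[of "m+h" h] by simp
  have e2: "cos (m+h) * cos h + sin (m+h) * sin h = cos m" using cos_diff[of "m+h" h] by simp
  have e3: "sin (m-h) * cos h + cos (m-h) * sin h = sin m" using sin_add[of "m-h" h] by simp
  have e4: "cos (m-h) * cos h - sin (m-h) * sin h = cos m" using cos_add[of "m-h" h] by simp
  have "cos h * dd z (m + h + pi/2) + sin h * dd z (m + h) =
        - Re z * (sin (m+h) * cos h - cos (m+h) * sin h) + Im z * (cos (m+h) * cos h + sin (m+h) * sin h)"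
    unfolding dd_plus_half by (simp add: dd_def algebra_simps)
  then show "cos h * dd z (m + h + pi/2) + sin h * dd z (m + h) = dd z (m + pi/2)"
    unfolding e1 e2 dd_plus_half by simp
  have "cos h * dd z (m - h + pi/2) - sin h * dd z (m - h) =
        - Re z * (sin (m-h) * cos h + cos (m-h) * sin h) + Im z * (cos (m-h) * cos h - sin (m-h) * sin h)"
    unfolding dd_plus_half by (simp add: dd_def algebra_simps)
  then show "cos h * dd z (m - h + pi/2) - sin h * dd z (m - h) = dd z (m + pi/2)"
    unfolding e3 e4 dd_plus_half by simp
qed

lemma H_interp:
  assumes "a \<le> \<phi>" "\<phi> \<le> b" "b - a < pi"
  shows "sin (b - a) * H \<phi> \<le> sin (b - \<phi>) * H a + sin (\<phi> - a) * H b"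
proof -
  let ?z = "s \<phi>"
  have id: "sin (b - a) * dd ?z \<phi> = sin (b - \<phi>) * dd ?z a + sin (\<phi> - a) * dd ?z b"
    by (simp add: dd_def sin_diff cos_diff algebra_simps)
  have p1: "sin (b - \<phi>) \<ge> 0" "sin (\<phi> - a) \<ge> 0" using assms by (auto intro!: sin_ge_zero)
  have "sin (b - \<phi>) * dd ?z a \<le> sin (b - \<phi>) * H a" using p1 dd_le_H by (intro mult_left_mono) auto
  moreover have "sin (\<phi> - a) * dd ?z b \<le> sin (\<phi> - a) * H b" using p1 dd_le_H by (intro mult_left_mono) auto
  moreover have "sin (b - a) * H \<phi> = sin (b - a) * dd ?z \<phi>" using H_eq by simp
  ultimately show ?thesis using id by linarith
qed

lemma chord_ge:
  assumes ab: "a < b" "b - a < pi"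
  shows "cos ((b - a)/2) * ell a b \<le> norm (s b - s a)"
proof -
  define h where "h = (b - a)/2"
  define m where "m = (a + b)/2"
  have hm: "b = m + h" "a = m - h" by (simp_all add: h_def m_def field_simps)
  have h0: "0 < h" "h < pi/2" using ab by (auto simp: h_def)
  have sh: "sin h > 0" using h0 by (intro sin_gt_zero) auto
  have ch: "cos h > 0" using h0 by (intro cos_gt_zero) auto
  have int1: "((\<lambda>\<phi>. sin (b - a) * H \<phi>) has_integral sin (b - a) * integral {a..b} H) {a..b}"
    using H_integrable by (intro has_integral_mult_right integrable_integral)
  have int2: "((\<lambda>\<phi>. sin (b - \<phi>) * H a + sin (\<phi> - a) * H b) has_integral
        ((1 - cos (b - a)) * H a + (1 - cos (b - a)) * H b)) {a..b}"
    using ab by (intro has_integral_add has_integral_mult_left sin1_has_integral sin2_has_integral) auto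
  have "sin (b - a) * integral {a..b} H \<le> (1 - cos (b - a)) * H a + (1 - cos (b - a)) * H b"
    by (rule has_integral_le[OF int1 int2]) (use H_interp ab in auto)
  moreover have "b - a = 2 * h" by (simp add: h_def)
  then have "sin (b - a) = 2 * sin h * cos h" "1 - cos (b - a) = 2 * sin h * sin h"
    using sin_double[of h] cos_double_sin[of h] by (simp_all add: power2_eq_square)
  ultimately have "2 * sin h * (cos h * integral {a..b} H) \<le> 2 * sin h * (sin h * (H a + H b))"
    by (simp add: algebra_simps)
  then have iH: "cos h * integral {a..b} H \<le> sin h * (H a + H b)" using sh by simp
  have "cos h * ell a b = cos h * W b - cos h * W a + cos h * integral {a..b} H"
    by (simp add: ell_def algebra_simps)
  also have "\<dots> \<le> (cos h * W b + sin h * H b) - (cos h * W a - sin h * H a)"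
    using iH by (simp add: algebra_simps)
  also have "\<dots> = dd (s b) (m + pi/2) - dd (s a) (m + pi/2)"
    unfolding W_def H_eq hm mid_identities ..
  also have "\<dots> = dd (s b - s a) (m + pi/2)" by (simp add: dd_diff)
  also have "\<dots> \<le> norm (s b - s a)" by (rule dd_le_norm)
  finally show ?thesis by (simp add: h_def)
qed

end

definition cross :: "complex \<Rightarrow> complex \<Rightarrow> real" where
  "cross x y = Re x * Im y - Im x * Re y"

lemma dd_plus_half0: "dd z (x + pi/2) = - Re z * sin x + Im z * cos x"
  by (simp add: dd_def cos_add sin_add)

lemma cross_dd: "cross x y = dd x \<phi> * dd y (\<phi> + pi/2) - dd x (\<phi> + pi/2) * dd y \<phi>"
proof -
  have "dd x \<phi> * dd y (\<phi> + pi/2) - dd x (\<phi> + pi/2) * dd y \<phi> =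
        (Re x * Im y - Im x * Re y) * (sin \<phi> * sin \<phi> + cos \<phi> * cos \<phi>)"
    unfolding dd_plus_half0 unfolding dd_def by algebra
  also have "sin \<phi> * sin \<phi> + cos \<phi> * cos \<phi> = 1"
    using sin_cos_squared_add[of \<phi>] by (simp add: power2_eq_square)
  finally show ?thesis by (simp add: cross_def)
qed

lemma cross_cis: "cross (complex_of_real r * cis a) (complex_of_real r' * cis b) = r * r' * sin (b - a)"
  by (simp add: cross_def sin_diff algebra_simps)

lemma polar_arctan:
  assumes "Re q > 0"
  shows "q = complex_of_real (norm q) * cis (arctan (Im q / Re q))"
proof -
  define u where "u = Im q / Re q"
  have n: "norm q = Re q * sqrt (1 + u\<^sup>2)"
  proof -
    have "norm q = sqrt ((Re q)\<^sup>2 * (1 + u\<^sup>2))"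
      using assms by (simp add: cmod_def u_def field_simps power2_eq_square)
    also have "\<dots> = Re q * sqrt (1 + u\<^sup>2)" using assms by (simp add: real_sqrt_mult)
    finally show ?thesis .
  qed
  have p: "sqrt (1 + u\<^sup>2) > 0" by (simp add: add_pos_nonneg)
  show ?thesis unfolding u_def[symmetric] n
    using p assms by (simp add: complex_eq_iff cos_arctan sin_arctan u_def)
qed

locale sconvi = sconv +
  fixes c :: complex and \<delta> D :: real
  assumes dpos: "\<delta> > 0" and cball: "cball c \<delta> \<subseteq> S"
    and Dge: "D \<ge> 1" and Dbound: "\<And>z. z \<in> S \<Longrightarrow> norm (z - c) \<le> D"
begin

lemma c_interior: "c \<in> interior S"
  using cball dpos mem_interior_cball by blast

lemma radial_unique:
  assumes z1: "z1 \<in> frontier S" and z2: "z2 \<in> frontier S"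
    and l: "l > 0" and eq: "z1 - c = complex_of_real l * (z2 - c)"
  shows "z1 = z2"
proof -
  have cl: "closure S = S" using compact_imp_closed[OF cpt] by simp
  have fi: "frontier S \<inter> interior S = {}" by (auto simp: frontier_def)
  have shrink: "w2 - e *\<^sub>R (w2 - c) \<notin> frontier S" if "w2 \<in> frontier S" "0 < e" "e \<le> 1" for w2 e
  proof -
    have "w2 \<in> closure S" using that(1) by (auto simp: frontier_def)
    then have "w2 - e *\<^sub>R (w2 - c) \<in> interior S"
      using mem_interior_closure_convex_shrink[OF cvx c_interior _ that(2,3)] by blast
    then show ?thesis using fi by blast
  qed
  have main: False if w: "w1 \<in> frontier S" "w2 \<in> frontier S" "0 < k" "k < 1"
      "w1 - c = complex_of_real k * (w2 - c)" for w1 w2 k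
  proof -
    have "w1 = w2 - (1 - k) *\<^sub>R (w2 - c)" using w(5) by (simp add: scaleR_conv_of_real algebra_simps)
    then show False using shrink[OF w(2), of "1 - k"] w by simp
  qed
  consider "l < 1" | "l = 1" | "l > 1" by linarith
  then show ?thesis
  proof cases
    case 1 then show ?thesis using main[OF z1 z2 l _ eq] by simp
  next
    case 2 then show ?thesis using eq by simp
  next
    case 3
    have "z2 - c = complex_of_real (1/l) * (z1 - c)" using eq l by simp
    then show ?thesis using main[OF z2 z1, of "1/l"] 3 by simp
  qed
qed

lemma H_margin: "H \<phi> - dd c \<phi> \<ge> \<delta>"
proof -
  have "c + complex_of_real \<delta> * cis \<phi> \<in> cball c \<delta>" using dpos by (simp add: dist_norm norm_mult)
  then have "c + complex_of_real \<delta> * cis \<phi> \<in> S" using cball by blast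
  then have "dd (c + complex_of_real \<delta> * cis \<phi>) \<phi> \<le> H \<phi>" by (rule H_ge)
  then show ?thesis by (simp add: dd_add dd_scale dd_cis)
qed

definition q :: "real \<Rightarrow> complex" where "q \<phi> = (s \<phi> - c) * cis (- \<phi>)"

lemma Re_q: "Re (q \<phi>) = dd (s \<phi> - c) \<phi>"
  by (simp add: q_def dd_def)
lemma Im_q: "Im (q \<phi>) = dd (s \<phi> - c) (\<phi> + pi/2)"
  by (simp add: q_def dd_def cos_add sin_add algebra_simps)
lemma Re_q_ge: "Re (q \<phi>) \<ge> \<delta>"
  using H_margin[of \<phi>] by (simp add: Re_q dd_diff H_eq)
lemma norm_q: "norm (q \<phi>) = norm (s \<phi> - c)"
  by (simp add: q_def norm_mult)

definition beta :: "real \<Rightarrow> real" where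
  "beta \<phi> = \<phi> + arctan (Im (q \<phi>) / Re (q \<phi>))"

lemma s_polar: "s \<phi> - c = complex_of_real (norm (s \<phi> - c)) * cis (beta \<phi>)"
proof -
  have "Re (q \<phi>) > 0" using Re_q_ge[of \<phi>] dpos by linarith
  then have "q \<phi> = complex_of_real (norm (q \<phi>)) * cis (arctan (Im (q \<phi>) / Re (q \<phi>)))"
    by (rule polar_arctan)
  then have "q \<phi> * cis \<phi> = complex_of_real (norm (s \<phi> - c)) * cis (beta \<phi>)"
    by (simp add: norm_q beta_def cis_mult[symmetric] mult.commute mult.left_commute)
  moreover have "q \<phi> * cis \<phi> = s \<phi> - c" by (simp add: q_def mult.assoc cis_mult)
  ultimately show ?thesis by simp
qed

lemma s_ne_c: "norm (s \<phi> - c) > 0"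
  using norm_q[of \<phi>] Re_q_ge[of \<phi>] dpos abs_Re_le_cmod[of "q \<phi>"] by linarith

lemma continuous_q: "continuous_on UNIV q"
  unfolding q_def[abs_def] by (intro continuous_intros continuous_s)

lemma continuous_beta: "continuous_on UNIV beta"
proof -
  have cRe: "continuous_on UNIV (\<lambda>\<phi>. Re (q \<phi>))" by (rule continuous_on_Re[OF continuous_q])
  have cIm: "continuous_on UNIV (\<lambda>\<phi>. Im (q \<phi>))" by (rule continuous_on_Im[OF continuous_q])
  have nz: "\<forall>\<phi>\<in>UNIV. Re (q \<phi>) \<noteq> 0" using Re_q_ge dpos by (metis UNIV_I not_less order_less_le_trans)
  have "continuous_on UNIV (\<lambda>\<phi>. Im (q \<phi>) / Re (q \<phi>))" by (rule continuous_on_divide[OF cIm cRe nz])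
  then have "continuous_on UNIV (\<lambda>\<phi>. arctan (Im (q \<phi>) / Re (q \<phi>)))" by (rule continuous_on_arctan)
  then have "continuous_on UNIV (\<lambda>\<phi>. \<phi> + arctan (Im (q \<phi>) / Re (q \<phi>)))"
    by (rule continuous_on_add[OF continuous_on_id])
  then show ?thesis by (simp add: beta_def[abs_def])
qed

lemma q_periodic: "q (\<phi> + 2*pi) = q \<phi>"
proof -
  have "cis (- (\<phi> + 2*pi)) = cis (-\<phi>) * cis (-(2*pi))" by (simp add: cis_mult)
  moreover have "cis (-(2*pi)) = 1" by (simp add: complex_eq_iff)
  ultimately show ?thesis unfolding q_def s_periodic by simp
qed

lemma beta_periodic: "beta (\<phi> + 2*pi) = beta \<phi> + 2*pi"
  by (simp add: beta_def q_periodic)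

lemma beta_bounds: "\<phi> - pi/2 < beta \<phi>" "beta \<phi> < \<phi> + pi/2"
  using arctan_bounded[of "Im (q \<phi>) / Re (q \<phi>)"] by (auto simp: beta_def)

definition eta :: real where "eta = arctan (\<delta> / D)"

lemma eta_bounds: "0 < eta" "eta < pi/2"
  using dpos Dge arctan_ubound[of "\<delta>/D"] by (auto simp: eta_def)

lemma eta_tan: "D * sin eta = \<delta> * cos eta"
proof -
  have "tan eta = \<delta> / D" by (simp add: eta_def tan_arctan)
  moreover have "cos eta > 0" using eta_bounds by (intro cos_gt_zero) auto
  ultimately show ?thesis using Dge by (simp add: tan_def field_simps)
qed

lemma arctan_q_bound: "\<bar>arctan (Im (q \<phi>) / Re (q \<phi>))\<bar> \<le> pi/2 - eta"
proof -
  have re: "Re (q \<phi>) \<ge> \<delta>" by (rule Re_q_ge)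
  have im: "\<bar>Im (q \<phi>)\<bar> \<le> D"
    using abs_Im_le_cmod[of "q \<phi>"] norm_q[of \<phi>] Dbound[OF s_prop(1)[of \<phi>]] by linarith
  have "\<bar>Im (q \<phi>) / Re (q \<phi>)\<bar> = \<bar>Im (q \<phi>)\<bar> / Re (q \<phi>)" using re dpos by simp
  also have "\<dots> \<le> D / \<delta>" using re im dpos Dge by (intro frac_le) auto
  finally have u: "\<bar>Im (q \<phi>) / Re (q \<phi>)\<bar> \<le> D / \<delta>" .
  have ai: "arctan (D / \<delta>) = pi/2 - eta"
    using arctan_inverse[of "\<delta> / D"] dpos Dge by (simp add: eta_def)
  have "Im (q \<phi>) / Re (q \<phi>) \<le> D / \<delta>" using u abs_ge_self[of "Im (q \<phi>) / Re (q \<phi>)"] by linarith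
  then have "arctan (Im (q \<phi>) / Re (q \<phi>)) \<le> arctan (D / \<delta>)"
    by (simp add: arctan_le_iff)
  moreover have "- (Im (q \<phi>) / Re (q \<phi>)) \<le> D / \<delta>" using u abs_ge_minus_self[of "Im (q \<phi>) / Re (q \<phi>)"] by linarith
  then have "- arctan (Im (q \<phi>) / Re (q \<phi>)) \<le> arctan (D / \<delta>)"
    by (simp add: arctan_le_iff arctan_minus[symmetric])
  ultimately show ?thesis using ai by linarith
qed

lemma cross_nonneg:
  assumes "\<phi> \<le> \<phi>'" "\<phi>' \<le> \<phi> + eta"
  shows "cross (s \<phi> - c) (s \<phi>' - c) \<ge> 0"
proof (cases "\<phi>' = \<phi>")
  case True then show ?thesis by (simp add: cross_def)
next
  case False
  define \<Delta> where "\<Delta> = \<phi>' - \<phi>"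
  have D0: "0 < \<Delta>" "\<Delta> \<le> eta" using assms False by (auto simp: \<Delta>_def)
  have sD: "sin \<Delta> > 0" using D0 eta_bounds by (intro sin_gt_zero) auto
  have cD: "cos \<Delta> > 0" using D0 eta_bounds by (intro cos_gt_zero) auto
  have "sin \<Delta> \<le> sin eta" using D0 eta_bounds by (intro sin_monotone_2pi_le) auto
  moreover have "cos eta \<le> cos \<Delta>" using D0 eta_bounds by (intro cos_monotone_0_pi_le) auto
  ultimately have DS: "D * sin \<Delta> \<le> \<delta> * cos \<Delta>"
    using eta_tan Dge dpos by (smt (verit, best) mult_left_mono)
  define x where "x = s \<phi> - c"
  define d where "d = s \<phi>' - s \<phi>"
  define p where "p = dd d \<phi>"
  define q' where "q' = dd d (\<phi> + pi/2)"
  define Hx where "Hx = dd x \<phi>"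
  define w where "w = dd x (\<phi> + pi/2)"
  have p0: "p \<le> 0" using dd_le_H[of \<phi>' \<phi>] H_eq[of \<phi>] by (simp add: p_def d_def dd_diff)
  have e0: "dd d \<phi>' \<ge> 0" using dd_le_H[of \<phi> \<phi>'] H_eq[of \<phi>'] by (simp add: d_def dd_diff)
  have eid: "dd d \<phi>' = p * cos \<Delta> + q' * sin \<Delta>"
  proof -
    have "\<phi>' = \<phi> + \<Delta>" by (simp add: \<Delta>_def)
    then show ?thesis unfolding p_def q'_def dd_plus_half0 by (simp add: dd_def cos_add sin_add algebra_simps)
  qed
  have Hx: "Hx \<ge> \<delta>" using Re_q_ge[of \<phi>] by (simp add: Re_q Hx_def x_def)
  have wD: "\<bar>w\<bar> \<le> D" unfolding w_def x_def
    using abs_dd_le_norm[of "s \<phi> - c" "\<phi> + pi/2"] Dbound[OF s_prop(1)[of \<phi>]] by linarith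
  have A2: "- p * cos \<Delta> \<le> q' * sin \<Delta>" using e0 eid by linarith
  have pc: "- p * cos \<Delta> \<ge> 0" using p0 cD by (simp add: mult_nonpos_nonneg)
  have A1: "q' \<ge> 0"
  proof (rule ccontr)
    assume "\<not> q' \<ge> 0"
    then have "q' * sin \<Delta> < 0" using sD by (simp add: mult_neg_pos)
    then show False using A2 pc by linarith
  qed
  have A3: "\<bar>w\<bar> * (- p * cos \<Delta>) \<le> \<bar>w\<bar> * (q' * sin \<Delta>)" using A2 by (intro mult_left_mono) auto
  have A4: "- \<bar>w\<bar> * (- p * cos \<Delta>) \<le> w * (- p * cos \<Delta>)"
  proof -
    have "- \<bar>w\<bar> \<le> w" by simp
    then show ?thesis using pc by (intro mult_right_mono) auto
  qed
  have A5: "\<bar>w\<bar> * sin \<Delta> \<le> Hx * cos \<Delta>"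
  proof -
    have "\<bar>w\<bar> * sin \<Delta> \<le> D * sin \<Delta>" using wD sD by (intro mult_right_mono) auto
    also have "\<dots> \<le> \<delta> * cos \<Delta>" by (rule DS)
    also have "\<dots> \<le> Hx * cos \<Delta>" using Hx cD by (intro mult_right_mono) auto
    finally show ?thesis .
  qed
  have A6: "q' * (\<bar>w\<bar> * sin \<Delta>) \<le> q' * (Hx * cos \<Delta>)" using A5 A1 by (intro mult_left_mono) auto
  have cr: "cross x (x + d) = Hx * q' - w * p"
  proof -
    have "cross x (x + d) = cross x d" by (simp add: cross_def algebra_simps)
    also have "\<dots> = Hx * q' - w * p" unfolding Hx_def q'_def w_def p_def by (rule cross_dd)
    finally show ?thesis .
  qed
  have "cos \<Delta> * cross x (x + d) = q' * (Hx * cos \<Delta>) + w * (- p * cos \<Delta>)"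
    unfolding cr by (simp add: algebra_simps)
  moreover have "q' * (Hx * cos \<Delta>) + w * (- p * cos \<Delta>) \<ge> 0"
    using A3 A4 A6 by (simp add: algebra_simps)
  ultimately have "cos \<Delta> * cross x (x + d) \<ge> 0" by simp
  then have "cross x (x + d) \<ge> 0" using cD by (simp add: zero_le_mult_iff)
  moreover have "x + d = s \<phi>' - c" by (simp add: x_def d_def)
  ultimately show ?thesis unfolding x_def by metis
qed

lemma beta_local:
  assumes "\<phi> \<le> \<phi>'" "\<phi>' \<le> \<phi> + eta"
  shows "beta \<phi> \<le> beta \<phi>'"
proof -
  have b1: "beta \<phi>' - beta \<phi> > - pi"
    using arctan_q_bound[of \<phi>] arctan_q_bound[of \<phi>'] assms eta_bounds
    unfolding beta_def by linarith
  have "cross (s \<phi> - c) (s \<phi>' - c) =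
        norm (s \<phi> - c) * norm (s \<phi>' - c) * sin (beta \<phi>' - beta \<phi>)"
    by (subst s_polar, subst (2) s_polar) (rule cross_cis)
  then have "norm (s \<phi> - c) * norm (s \<phi>' - c) * sin (beta \<phi>' - beta \<phi>) \<ge> 0"
    using cross_nonneg[OF assms] by simp
  moreover have "norm (s \<phi> - c) * norm (s \<phi>' - c) > 0" using s_ne_c[of \<phi>] s_ne_c[of \<phi>'] by simp
  ultimately have sn: "sin (beta \<phi>' - beta \<phi>) \<ge> 0"
    by (metis zero_le_mult_iff not_le)
  show ?thesis
  proof (rule ccontr)
    assume "\<not> beta \<phi> \<le> beta \<phi>'"
    then have "sin (beta \<phi> - beta \<phi>') > 0" using b1 by (intro sin_gt_zero) auto
    moreover have "sin (beta \<phi> - beta \<phi>') = - sin (beta \<phi>' - beta \<phi>)"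
      by (metis minus_diff_eq sin_minus)
    ultimately show False using sn by linarith
  qed
qed

lemma beta_mono_n: "\<phi> \<le> \<phi>' \<Longrightarrow> \<phi>' \<le> \<phi> + real n * eta \<Longrightarrow> beta \<phi> \<le> beta \<phi>'"
proof (induction n arbitrary: \<phi>')
  case 0 then show ?case by simp
next
  case (Suc n)
  show ?case
  proof (cases "\<phi>' \<le> \<phi> + eta")
    case True then show ?thesis using beta_local Suc.prems by blast
  next
    case False
    have "beta \<phi> \<le> beta (\<phi>' - eta)"
      using Suc.prems False by (intro Suc.IH) (auto simp: algebra_simps)
    also have "\<dots> \<le> beta \<phi>'" using eta_bounds by (intro beta_local) auto
    finally show ?thesis .
  qed
qed

lemma beta_mono: "\<phi> \<le> \<phi>' \<Longrightarrow> beta \<phi> \<le> beta \<phi>'"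
proof -
  assume a: "\<phi> \<le> \<phi>'"
  obtain n where "(\<phi>' - \<phi>) / eta \<le> real n" using real_arch_simple by blast
  then have "\<phi>' \<le> \<phi> + real n * eta" using eta_bounds by (simp add: field_simps)
  then show ?thesis using beta_mono_n a by blast
qed

end

lemma cis_eq_1_period:
  assumes "0 < y" "y < 2*pi" shows "cos y \<noteq> 1"
proof -
  have "sin (y/2) > 0" using assms by (intro sin_gt_zero) auto
  moreover have "cos y = 1 - 2 * (sin (y/2))\<^sup>2" using cos_double_sin[of "y/2"] by simp
  ultimately show ?thesis by simp
qed

context sconvi
begin

definition nu :: "real \<Rightarrow> real" where "nu x = Inf {\<phi>. x \<le> beta \<phi>}"

lemma nu_set:
  shows "x + pi/2 \<in> {\<phi>. x \<le> beta \<phi>}" "bdd_below {\<phi>. x \<le> beta \<phi>}" "closed {\<phi>. x \<le> beta \<phi>}"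
proof -
  show "x + pi/2 \<in> {\<phi>. x \<le> beta \<phi>}" using beta_bounds(1)[of "x + pi/2"] by simp
  show "bdd_below {\<phi>. x \<le> beta \<phi>}"
    unfolding bdd_below_def using beta_bounds(2) by (metis (mono_tags, lifting) diff_le_eq
        less_eq_real_def mem_Collect_eq order_trans)
  show "closed {\<phi>. x \<le> beta \<phi>}" by (intro closed_Collect_le continuous_on_const continuous_beta)
qed

lemma nu_in: "x \<le> beta (nu x)"
proof -
  have "Inf {\<phi>. x \<le> beta \<phi>} \<in> {\<phi>. x \<le> beta \<phi>}"
    using nu_set by (intro closed_contains_Inf) auto
  then show ?thesis by (simp add: nu_def)
qed

lemma nu_lower: "x \<le> beta \<phi> \<Longrightarrow> nu x \<le> \<phi>"
  unfolding nu_def using nu_set(2) by (intro cInf_lower) auto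

lemma nu_beta: "beta (nu x) = x"
proof -
  have "continuous_on {x - pi/2 .. x + pi/2} beta" using continuous_beta continuous_on_subset by blast
  moreover have "beta (x - pi/2) \<le> x" "x \<le> beta (x + pi/2)"
    using beta_bounds(2)[of "x - pi/2"] beta_bounds(1)[of "x + pi/2"] by auto
  ultimately obtain \<phi>0 where "beta \<phi>0 = x" using IVT'[of beta "x - pi/2" x "x + pi/2"] by auto
  then have "nu x \<le> \<phi>0" by (intro nu_lower) simp
  then have "beta (nu x) \<le> x" using beta_mono \<open>beta \<phi>0 = x\<close> by metis
  then show ?thesis using nu_in[of x] by simp
qed

lemma nu_mono: "x \<le> y \<Longrightarrow> nu x \<le> nu y"
  using nu_lower[of x "nu y"] nu_beta[of y] by simp

lemma nu_shift: "nu (x + 2*pi) = nu x + 2*pi"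
proof -
  have "nu (x + 2*pi) \<le> nu x + 2*pi"
    by (intro nu_lower) (simp add: beta_periodic nu_beta)
  moreover have "beta (nu (x + 2*pi) - 2*pi) = x"
    using beta_periodic[of "nu (x + 2*pi) - 2*pi"] nu_beta[of "x + 2*pi"] by simp
  then have "nu x \<le> nu (x + 2*pi) - 2*pi" by (intro nu_lower) simp
  ultimately show ?thesis by simp
qed

lemma frontier_ne_c: "z \<in> frontier S \<Longrightarrow> z \<noteq> c"
  using c_interior by (auto simp: frontier_def)

lemma frontier_eq_s:
  assumes z: "z \<in> frontier S" and r: "r > 0" and eq: "z - c = complex_of_real r * cis x"
  shows "z = s (nu x)"
proof -
  define R where "R = norm (s (nu x) - c)"
  have R: "R > 0" using s_ne_c by (simp add: R_def)
  have sR: "s (nu x) - c = complex_of_real R * cis x"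
    using s_polar[of "nu x"] nu_beta[of x] by (simp add: R_def)
  have "z - c = complex_of_real (r / R) * (s (nu x) - c)"
    using R by (simp add: eq sR)
  moreover have "r / R > 0" using R r by simp
  ultimately show ?thesis using radial_unique[OF z s_frontier] by blast
qed

end

locale sconvg = sconvi +
  fixes g :: "real \<Rightarrow> complex" and \<Theta> :: "real \<Rightarrow> real"
  assumes sp: "simple_path g" and closed_g: "pathfinish g = pathstart g"
    and img: "path_image g = frontier S"
    and contT: "continuous_on {0..1} \<Theta>"
    and polar: "\<And>t. t \<in> {0..1} \<Longrightarrow> g t - c = complex_of_real (norm (g t - c)) * cis (\<Theta> t)"
begin

lemma g_front: "t \<in> {0..1} \<Longrightarrow> g t \<in> frontier S"
  using img by (auto simp: path_image_def)

lemma g_eq_s: "t \<in> {0..1} \<Longrightarrow> g t = s (nu (\<Theta> t))"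
  using frontier_eq_s[OF g_front _ polar] frontier_ne_c[OF g_front] by simp

lemma g_cis: "t \<in> {0..1} \<Longrightarrow> t' \<in> {0..1} \<Longrightarrow> cis (\<Theta> t) = cis (\<Theta> t') \<Longrightarrow> g t = g t'"
proof -
  assume t: "t \<in> {0..1}" "t' \<in> {0..1}" and e: "cis (\<Theta> t) = cis (\<Theta> t')"
  define r where "r = norm (g t - c)"
  define r' where "r' = norm (g t' - c)"
  have r: "r > 0" "r' > 0" unfolding r_def r'_def
    using frontier_ne_c[OF g_front[OF t(1)]] frontier_ne_c[OF g_front[OF t(2)]] by simp_all
  have e1': "g t - c = complex_of_real r * cis (\<Theta> t)" unfolding r_def by (rule polar[OF t(1)])
  have e1: "g t - c = complex_of_real r * cis (\<Theta> t')" by (simp only: e1' e)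
  have e2: "g t' - c = complex_of_real r' * cis (\<Theta> t')" unfolding r'_def by (rule polar[OF t(2)])
  have rr0: "complex_of_real (r / r') * complex_of_real r' = complex_of_real r"
  proof -
    have "(r / r') * r' = r" using r by simp
    then show ?thesis by (metis of_real_mult)
  qed
  have rr: "complex_of_real (r / r') * (complex_of_real r' * cis (\<Theta> t')) = complex_of_real r * cis (\<Theta> t')"
    by (simp only: mult.assoc[symmetric] rr0)
  have "g t - c = complex_of_real (r / r') * (g t' - c)"
    by (simp only: e2 rr e1)
  moreover have "r / r' > 0" using r by (rule divide_pos_pos)
  ultimately show ?thesis using radial_unique[OF g_front[OF t(1)] g_front[OF t(2)]] by blast
qed

lemma loop: "t \<in> {0..1} \<Longrightarrow> t' \<in> {0..1} \<Longrightarrow> g t = g t' \<Longrightarrow> t = t' \<or> t = 0 \<and> t' = 1 \<or> t = 1 \<and> t' = 0"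
  using sp unfolding simple_path_def loop_free_def by blast

lemma g01: "g 1 = g 0"
  using closed_g by (simp add: pathfinish_def pathstart_def)

lemma inj_T: "inj_on \<Theta> {0..<1}"
proof (rule inj_onI)
  fix t t' assume t: "t \<in> {0..<1}" "t' \<in> {0..<1}" and e: "\<Theta> t = \<Theta> t'"
  then have "g t = g t'" using g_cis by auto
  then show "t = t'" using loop[of t t'] t by auto
qed

lemma T_cases: "strict_mono_on {0..<1} \<Theta> \<or> strict_antimono_on {0..<1} \<Theta>"
proof -
  have "is_interval {0..<(1::real)}" by (simp add: is_interval_ic)
  moreover have "continuous_on {0..<1} \<Theta>" by (rule continuous_on_subset[OF contT]) auto
  ultimately show ?thesis using injective_eq_monotone_map inj_T by blast
qed

end

locale sconvgm = sconvg +
  assumes smono: "strict_mono_on {0..<1} \<Theta>"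
begin

lemma T_period_avoid:
  assumes t: "t \<in> {0<..<1}" shows "\<Theta> t \<noteq> \<Theta> 0 + 2*pi"
proof
  assume "\<Theta> t = \<Theta> 0 + 2*pi"
  then have "cis (\<Theta> t) = cis (\<Theta> 0)" by (simp add: complex_eq_iff)
  then have "g t = g 0" using g_cis t by auto
  then show False using loop[of t 0] t by auto
qed

lemma T_lt: "t \<in> {0..<1} \<Longrightarrow> \<Theta> t < \<Theta> 0 + 2*pi"
proof (rule ccontr)
  assume t: "t \<in> {0..<1}" and n: "\<not> \<Theta> t < \<Theta> 0 + 2*pi"
  have "continuous_on {0..t} \<Theta>" using contT t by (auto intro: continuous_on_subset)
  then obtain t'' where t'': "t'' \<in> {0..t}" "\<Theta> t'' = \<Theta> 0 + 2*pi"
    using IVT'[of \<Theta> 0 "\<Theta> 0 + 2*pi" t] n t by auto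
  have "t'' \<noteq> 0" using t'' pi_gt_zero by auto
  then show False using T_period_avoid[of t''] t t'' by auto
qed

lemma T_1: "\<Theta> 1 = \<Theta> 0 + 2*pi"
proof -
  have h: "\<Theta> 0 < \<Theta> (1/2)" using smono by (auto simp: strict_mono_on_def)
  have c1: "\<Theta> (1/2) \<le> \<Theta> 1"
  proof (rule ccontr)
    assume a: "\<not> \<Theta> (1/2) \<le> \<Theta> 1"
    define v where "v = (max (\<Theta> 0) (\<Theta> 1) + \<Theta> (1/2)) / 2"
    have v: "\<Theta> 0 < v" "v < \<Theta> (1/2)" "\<Theta> 1 < v" using h a by (auto simp: v_def)
    have "continuous_on {1/2..1} \<Theta>" "continuous_on {0..1/2} \<Theta>" using contT by (auto intro: continuous_on_subset)
    then obtain t1 t2 where t1: "t1 \<in> {1/2..1}" "\<Theta> t1 = v" and t2: "t2 \<in> {0..1/2}" "\<Theta> t2 = v"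
      using IVT2'[of \<Theta> 1 v "1/2"] IVT'[of \<Theta> 0 v "1/2"] v by auto
    have "\<Theta> t1 \<noteq> \<Theta> (1/2)" "\<Theta> t1 \<noteq> \<Theta> 1" "\<Theta> t2 \<noteq> \<Theta> (1/2)" using t1 t2 v by auto
    then have "t1 \<noteq> 1/2" "t1 \<noteq> 1" "t2 \<noteq> 1/2" by metis+
    then have "t1 \<noteq> t2" "t1 \<in> {0..<1}" "t2 \<in> {0..<1}" using t1 t2 by auto
    then show False using inj_T t1 t2 by (metis inj_onD)
  qed
  have c2: "\<Theta> 1 \<le> \<Theta> 0 + 2*pi"
  proof (rule ccontr)
    assume "\<not> \<Theta> 1 \<le> \<Theta> 0 + 2*pi"
    then obtain t where t: "t \<in> {0..1}" "\<Theta> t = \<Theta> 0 + 2*pi"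
      using IVT'[of \<Theta> 0 "\<Theta> 0 + 2*pi" 1] contT pi_gt_zero by auto
    have "t \<noteq> 0" "t \<noteq> 1" using t \<open>\<not> _\<close> pi_gt_zero by auto
    then show False using T_period_avoid[of t] t by auto
  qed
  have "cis (\<Theta> 1) = cis (\<Theta> 0)"
  proof -
    define r where "r = norm (g 0 - c)"
    have r: "r > 0" using frontier_ne_c[OF g_front[of 0]] by (simp add: r_def)
    have a0: "g 0 - c = complex_of_real r * cis (\<Theta> 0)" unfolding r_def by (rule polar) simp
    have a1: "g 0 - c = complex_of_real r * cis (\<Theta> 1)" unfolding r_def by (subst (1 2) g01[symmetric], rule polar) simp
    have "complex_of_real r * cis (\<Theta> 1) = complex_of_real r * cis (\<Theta> 0)" using a0 a1 by simp
    then show ?thesis using r by simp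
  qed
  then have "cis (\<Theta> 1 - \<Theta> 0) = 1" by (simp add: cis_divide[symmetric])
  then have "cos (\<Theta> 1 - \<Theta> 0) = 1" by (simp add: complex_eq_iff)
  then have "\<not> (0 < \<Theta> 1 - \<Theta> 0 \<and> \<Theta> 1 - \<Theta> 0 < 2*pi)" using cis_eq_1_period by blast
  then show ?thesis using h c1 c2 by linarith
qed

lemma T_mono: "t \<in> {0..1} \<Longrightarrow> t' \<in> {0..1} \<Longrightarrow> t < t' \<Longrightarrow> \<Theta> t < \<Theta> t'"
proof -
  assume t: "t \<in> {0..1}" "t' \<in> {0..1}" "t < t'"
  show "\<Theta> t < \<Theta> t'"
  proof (cases "t' = 1")
    case True
    then show ?thesis using T_lt[of t] T_1 t by auto
  next
    case False
    then show ?thesis using smono t by (auto simp: strict_mono_on_def)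
  qed
qed

lemma T_range: "t \<in> {0..1} \<Longrightarrow> \<Theta> 0 \<le> \<Theta> t \<and> \<Theta> t \<le> \<Theta> 0 + 2*pi"
  using T_mono[of 0 t] T_mono[of t 1] T_1 by (cases "t = 0"; cases "t = 1") auto

end

lemma chain_mono:
  fixes a :: "nat \<Rightarrow> real"
  assumes "\<forall>i<n. a i \<le> a (Suc i)" "i \<le> j" "j \<le> n"
  shows "a i \<le> a j"
  using assms(2,3)
proof (induction j)
  case 0 then show ?case by simp
next
  case (Suc j)
  show ?case
  proof (cases "i = Suc j")
    case True then show ?thesis by simp
  next
    case False
    then have "a i \<le> a j" using Suc by simp
    also have "a j \<le> a (Suc j)" using assms(1) Suc.prems by simp
    finally show ?thesis .
  qed
qed

context sconv
begin

lemma ell_telescope: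
  assumes "\<forall>i<n. a i \<le> a (Suc i)"
  shows "(\<Sum>i<n. ell (a i) (a (Suc i))) = ell (a 0) (a n)"
  using assms
proof (induction n)
  case 0 then show ?case by (simp add: ell_def)
next
  case (Suc n)
  have "(\<Sum>i<Suc n. ell (a i) (a (Suc i))) = ell (a 0) (a n) + ell (a n) (a (Suc n))"
    using Suc by simp
  also have "\<dots> = ell (a 0) (a (Suc n))"
    using chain_mono[OF Suc.prems, of 0 n] Suc.prems by (intro ell_add) auto
  finally show ?case .
qed

lemma ell_period: "ell a (a + 2*pi) = I"
  unfolding ell_def I_def using W_periodic[of a] period_integral[OF continuous_H H_periodic, of a] by simp

end

context sconvi
begin

lemma s_nu_beta: "s (nu (beta \<phi>)) = s \<phi>"
  using frontier_eq_s[OF s_frontier s_ne_c s_polar] by simp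

end

context sconvgm
begin

lemma T_le: "t \<in> {0..1} \<Longrightarrow> t' \<in> {0..1} \<Longrightarrow> t \<le> t' \<Longrightarrow> \<Theta> t \<le> \<Theta> t'"
  using T_mono[of t t'] by (cases "t = t'") auto

lemma T_inj: "t \<in> {0..1} \<Longrightarrow> t' \<in> {0..1} \<Longrightarrow> \<Theta> t = \<Theta> t' \<Longrightarrow> t = t'"
  using T_mono[of t t'] T_mono[of t' t] by (cases t t' rule: linorder_cases) auto

lemma upper:
  assumes t0: "t 0 = 0" and tn: "t n = 1" and tm: "\<forall>i<n. t i \<le> t (Suc i)"
  shows "(\<Sum>i<n. norm (g (t (Suc i)) - g (t i))) \<le> I"
proof -
  have tr: "i \<le> n \<Longrightarrow> t i \<in> {0..1}" for i
    using chain_mono[OF tm, of 0 i] chain_mono[OF tm, of i n] t0 tn by auto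
  define a where "a i = nu (\<Theta> (t i))" for i
  have am: "\<forall>i<n. a i \<le> a (Suc i)"
    using tr tm by (auto simp: a_def intro!: nu_mono T_le)
  have an: "a n = a 0 + 2*pi" using T_1 by (simp add: a_def t0 tn nu_shift)
  have ga: "i \<le> n \<Longrightarrow> g (t i) = s (a i)" for i using g_eq_s tr by (simp add: a_def)
  have "(\<Sum>i<n. norm (g (t (Suc i)) - g (t i))) \<le> (\<Sum>i<n. ell (a i) (a (Suc i)))"
  proof (rule sum_mono)
    fix i assume "i \<in> {..<n}"
    then have i: "i < n" by simp
    have "a (Suc i) \<le> a n" using chain_mono[OF am, of "Suc i" n] i by simp
    moreover have "a 0 \<le> a i" using chain_mono[OF am, of 0 i] i by simp
    ultimately have "a (Suc i) \<le> a i + 2*pi" using an by simp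
    then show "norm (g (t (Suc i)) - g (t i)) \<le> ell (a i) (a (Suc i))"
      using ga[of i] ga[of "Suc i"] i am by (auto intro!: chord_le)
  qed
  also have "\<dots> = ell (a 0) (a n)" by (rule ell_telescope[OF am])
  also have "\<dots> = I" using an ell_period by simp
  finally show ?thesis .
qed

lemma lower:
  assumes N: "N \<ge> 3"
  shows "\<exists>n t. t 0 = 0 \<and> t n = 1 \<and> (\<forall>i<n. t i \<le> t (Suc i)) \<and>
           cos (pi / real N) * I \<le> (\<Sum>i<n. norm (g (t (Suc i)) - g (t i)))"
proof -
  define a0 where "a0 = nu (\<Theta> 0)"
  define \<phi> where "\<phi> k = a0 + 2*pi*real k / real N" for k
  define x where "x k = beta (\<phi> k)" for k
  have Npos: "real N > 0" using N by simp
  have \<phi>m: "\<phi> k < \<phi> (Suc k)" for k using Npos by (simp add: \<phi>_def field_simps)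
  have \<phi>d: "\<phi> (Suc k) - \<phi> k = 2 * pi / real N" for k using Npos by (simp add: \<phi>_def field_simps)
  have x0: "x 0 = \<Theta> 0" by (simp add: x_def \<phi>_def a0_def nu_beta)
  have xN: "x N = \<Theta> 1" using Npos by (simp add: x_def \<phi>_def a0_def beta_periodic nu_beta T_1)
  have xmono: "k \<le> k' \<Longrightarrow> x k \<le> x k'" for k k'
    using Npos by (auto simp: x_def \<phi>_def intro!: beta_mono divide_right_mono)
  have ex: "\<exists>\<tau>. \<tau> \<in> {0..1} \<and> \<Theta> \<tau> = x k" if "k \<le> N" for k
  proof -
    have "\<Theta> 0 \<le> x k" "x k \<le> \<Theta> 1" using xmono[of 0 k] xmono[of k N] that x0 xN by auto
    then show ?thesis using IVT'[of \<Theta> 0 "x k" 1] contT by auto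
  qed
  define t where "t k = (SOME \<tau>. \<tau> \<in> {0..1} \<and> \<Theta> \<tau> = x k)" for k
  have tp: "k \<le> N \<Longrightarrow> t k \<in> {0..1} \<and> \<Theta> (t k) = x k" for k
    unfolding t_def using ex by (rule someI_ex)
  have t0: "t 0 = 0" using tp[of 0] x0 T_inj[of "t 0" 0] by auto
  have tN: "t N = 1" using tp[of N] xN T_inj[of "t N" 1] by auto
  have tm: "\<forall>i<N. t i \<le> t (Suc i)"
  proof (intro allI impI)
    fix i assume i: "i < N"
    show "t i \<le> t (Suc i)"
    proof (rule ccontr)
      assume "\<not> t i \<le> t (Suc i)"
      then have "\<Theta> (t (Suc i)) < \<Theta> (t i)" using tp[of i] tp[of "Suc i"] i by (intro T_mono) auto
      then show False using tp[of i] tp[of "Suc i"] i xmono[of i "Suc i"] by auto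
    qed
  qed
  have gt: "k \<le> N \<Longrightarrow> g (t k) = s (\<phi> k)" for k
    using g_eq_s[of "t k"] tp[of k] s_nu_beta[of "\<phi> k"] by (simp add: x_def)
  have lt: "\<phi> (Suc k) - \<phi> k < pi" for k
  proof -
    have "2 * pi / real N < pi" using N pi_gt_zero by (simp add: field_simps)
    then show ?thesis using \<phi>d by simp
  qed
  have "cos (pi / real N) * I = cos (pi / real N) * ell (\<phi> 0) (\<phi> N)"
    using ell_period[of a0] Npos by (simp add: \<phi>_def)
  also have "\<dots> = (\<Sum>i<N. cos (pi / real N) * ell (\<phi> i) (\<phi> (Suc i)))"
  proof -
    have "(\<Sum>i<N. ell (\<phi> i) (\<phi> (Suc i))) = ell (\<phi> 0) (\<phi> N)"
      using \<phi>m by (intro ell_telescope) (simp add: less_imp_le)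
    then show ?thesis by (simp add: sum_distrib_left[symmetric])
  qed
  also have "\<dots> \<le> (\<Sum>i<N. norm (g (t (Suc i)) - g (t i)))"
  proof (rule sum_mono)
    fix i assume "i \<in> {..<N}"
    then have i: "i < N" by simp
    have "cos ((\<phi> (Suc i) - \<phi> i) / 2) * ell (\<phi> i) (\<phi> (Suc i)) \<le> norm (s (\<phi> (Suc i)) - s (\<phi> i))"
      using \<phi>m lt by (intro chord_ge) auto
    moreover have "(\<phi> (Suc i) - \<phi> i) / 2 = pi / real N" using \<phi>d by simp
    ultimately show "cos (pi / real N) * ell (\<phi> i) (\<phi> (Suc i)) \<le> norm (g (t (Suc i)) - g (t i))"
      using gt[of i] gt[of "Suc i"] i by simp
  qed
  finally show ?thesis using t0 tN tm by blast
qed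

lemma curve_length_eq: "curve_length g = I"
proof -
  define A where "A = {(\<Sum>i<n. norm (g (t (Suc i)) - g (t i))) | n t.
       t 0 = 0 \<and> t n = 1 \<and> (\<forall>i<n. t i \<le> t (Suc i))}"
  have cl: "curve_length g = Sup A" by (simp add: curve_length_def A_def)
  have ub: "\<And>y. y \<in> A \<Longrightarrow> y \<le> I" unfolding A_def using upper by blast
  have ne: "A \<noteq> {}"
  proof -
    have "(\<Sum>i<1. norm (g ((\<lambda>k. real k) (Suc i)) - g ((\<lambda>k. real k) i))) \<in> A"
      unfolding A_def by (intro CollectI exI[of _ "1::nat"] exI[of _ "\<lambda>k. real k"]) auto
    then show ?thesis by blast
  qed
  have bdd: "bdd_above A" using ub by (auto simp: bdd_above_def)
  have le: "Sup A \<le> I" using ne ub by (intro cSup_least) auto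
  have ge: "cos (pi / real N) * I \<le> Sup A" if N3: "N \<ge> 3" for N
  proof -
    obtain n t where "t 0 = 0 \<and> t n = 1 \<and> (\<forall>i<n. t i \<le> t (Suc i))"
      "cos (pi / real N) * I \<le> (\<Sum>i<n. norm (g (t (Suc i)) - g (t i)))"
      using lower[OF N3] by blast
    moreover then have "(\<Sum>i<n. norm (g (t (Suc i)) - g (t i))) \<in> A" unfolding A_def by blast
    ultimately show ?thesis using cSup_upper[OF _ bdd] by (meson order_trans)
  qed
  have lim: "(\<lambda>N. cos (pi / real N) * I) \<longlonglongrightarrow> cos 0 * I"
    by (intro tendsto_intros lim_const_over_n)
  have "I \<le> Sup A"
    using LIMSEQ_le_const2[OF lim] ge by auto
  then show ?thesis using le cl by simp
qed

end

lemma curve_length_rev_sub: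
  "{(\<Sum>i<n. norm (g (t (Suc i)) - g (t i))) | n t. t 0 = 0 \<and> t n = 1 \<and> (\<forall>i<n. t i \<le> t (Suc i))}
   \<subseteq> {(\<Sum>i<n. norm (reversepath g (t (Suc i)) - reversepath g (t i))) | n t. t 0 = 0 \<and> t n = 1 \<and> (\<forall>i<n. t i \<le> t (Suc i))}"
proof
  fix y assume "y \<in> {(\<Sum>i<n. norm (g (t (Suc i)) - g (t i))) | n t. t 0 = 0 \<and> t n = 1 \<and> (\<forall>i<n. t i \<le> t (Suc i))}"
  then obtain n t where y: "y = (\<Sum>i<n. norm (g (t (Suc i)) - g (t i)))"
    and t: "t 0 = 0" "t n = 1" "\<forall>i<n. t i \<le> t (Suc i)" by blast
  define t' where "t' i = 1 - t (n - i)" for i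
  have t'0: "t' 0 = 0" "t' n = 1" using t by (auto simp: t'_def)
  have t'm: "\<forall>i<n. t' i \<le> t' (Suc i)"
  proof (intro allI impI)
    fix i assume i: "i < n"
    then have "n - i = Suc (n - Suc i)" by simp
    then show "t' i \<le> t' (Suc i)" using t(3) i by (simp add: t'_def)
  qed
  define f where "f j = norm (g (t (Suc j)) - g (t j))" for j
  have "(\<Sum>i<n. norm (reversepath g (t' (Suc i)) - reversepath g (t' i))) = (\<Sum>i<n. f (n - Suc i))"
  proof (rule sum.cong)
    fix i assume "i \<in> {..<n}"
    then have "n - i = Suc (n - Suc i)" by simp
    then show "norm (reversepath g (t' (Suc i)) - reversepath g (t' i)) = f (n - Suc i)"
      by (simp add: reversepath_def t'_def f_def norm_minus_commute)
  qed simp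
  also have "\<dots> = (\<Sum>j<n. f j)" by (rule sum.nat_diff_reindex)
  finally have "y = (\<Sum>i<n. norm (reversepath g (t' (Suc i)) - reversepath g (t' i)))"
    using y by (simp add: f_def)
  then show "y \<in> {(\<Sum>i<n. norm (reversepath g (t (Suc i)) - reversepath g (t i))) | n t. t 0 = 0 \<and> t n = 1 \<and> (\<forall>i<n. t i \<le> t (Suc i))}"
    using t'0 t'm by blast
qed

lemma curve_length_rev: "curve_length (reversepath g) = curve_length g"
proof -
  have "{(\<Sum>i<n. norm (g (t (Suc i)) - g (t i))) | n t. t 0 = 0 \<and> t n = 1 \<and> (\<forall>i<n. t i \<le> t (Suc i))}
   = {(\<Sum>i<n. norm (reversepath g (t (Suc i)) - reversepath g (t i))) | n t. t 0 = 0 \<and> t n = 1 \<and> (\<forall>i<n. t i \<le> t (Suc i))}"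
    using curve_length_rev_sub[of g] curve_length_rev_sub[of "reversepath g"] by simp
  then show ?thesis unfolding curve_length_def by simp
qed

context sconvi
begin

lemma lift_exists:
  assumes sp: "simple_path g" and img: "path_image g = frontier S"
  obtains \<Theta> where "continuous_on {0..1} \<Theta>"
    "\<And>t. t \<in> {0..1} \<Longrightarrow> g t - c = complex_of_real (norm (g t - c)) * cis (\<Theta> t)"
proof -
  have cg: "continuous_on {0..1} (\<lambda>t. g t - c)"
    using sp by (intro continuous_intros) (auto simp: simple_path_def path_def)
  have nz: "g t - c \<noteq> 0" if "t \<in> {0..1}" for t
  proof -
    have "g t \<in> frontier S" using img that by (auto simp: path_image_def)
    then show ?thesis using frontier_ne_c by simp
  qed
  obtain L where L: "continuous_on {0..1} L" "\<And>t. t \<in> {0..1} \<Longrightarrow> g t - c = exp (L t)"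
    using continuous_logarithm_on_contractible[OF cg convex_imp_contractible[OF convex_real_interval(5)] nz]
    by blast
  show ?thesis
  proof
    show "continuous_on {0..1} (\<lambda>t. Im (L t))" by (intro continuous_intros L(1))
    fix t :: real assume t: "t \<in> {0..1}"
    have "g t - c = complex_of_real (exp (Re (L t))) * cis (Im (L t))"
      using L(2)[OF t] exp_eq_polar by simp
    moreover have "norm (g t - c) = exp (Re (L t))" using L(2)[OF t] by simp
    ultimately show "g t - c = complex_of_real (norm (g t - c)) * cis (Im (L t))" by simp
  qed
qed

lemma curve_length_any:
  assumes sp: "simple_path g" and cl: "pathfinish g = pathstart g" and img: "path_image g = frontier S"
  shows "curve_length g = I"
proof -
  obtain \<Theta> where T: "continuous_on {0..1} \<Theta>"
    "\<And>t. t \<in> {0..1} \<Longrightarrow> g t - c = complex_of_real (norm (g t - c)) * cis (\<Theta> t)"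
    using lift_exists[OF sp img] by blast
  interpret G: sconvg S c \<delta> D g \<Theta>
    by unfold_locales (use sp cl img T in auto)
  consider "strict_mono_on {0..<1} \<Theta>" | "strict_antimono_on {0..<1} \<Theta>" using G.T_cases by blast
  then show ?thesis
  proof cases
    case 1
    interpret M: sconvgm S c \<delta> D g \<Theta> by unfold_locales (rule 1)
    show ?thesis by (rule M.curve_length_eq)
  next
    case 2
    define g' where "g' = reversepath g"
    define \<Theta>' where "\<Theta>' t = \<Theta> (1 - t)" for t
    have sp': "simple_path g'" using simple_path_reversepath[OF sp] by (simp add: g'_def)
    have cl': "pathfinish g' = pathstart g'" using cl by (simp add: g'_def)
    have img': "path_image g' = frontier S" using img by (simp add: g'_def)
    have T1: "continuous_on {0..1} \<Theta>'"
      unfolding \<Theta>'_def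
      by (rule continuous_on_compose2[OF T(1)]) (auto intro!: continuous_intros)
    have T2: "g' t - c = complex_of_real (norm (g' t - c)) * cis (\<Theta>' t)" if "t \<in> {0..1}" for t
      using T(2)[of "1 - t"] that by (simp add: g'_def \<Theta>'_def reversepath_def)
    interpret G': sconvg S c \<delta> D g' \<Theta>'
      by unfold_locales (use sp' cl' img' T1 T2 in auto)
    have "strict_mono_on {0..<1} \<Theta>'"
    proof -
      have "\<not> strict_antimono_on {0..<1} \<Theta>'"
      proof
        assume "strict_antimono_on {0..<1} \<Theta>'"
        then have "\<Theta>' (1/2) < \<Theta>' (1/4)" by (auto simp: monotone_on_def)
        moreover have "\<Theta> (3/4) < \<Theta> (1/2)" using 2 by (auto simp: monotone_on_def)
        ultimately show False by (simp add: \<Theta>'_def)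
      qed
      then show ?thesis using G'.T_cases by blast
    qed
    then interpret M: sconvgm S c \<delta> D g' \<Theta>' by unfold_locales
    have "curve_length g' = I" by (rule M.curve_length_eq)
    then show ?thesis by (simp add: g'_def curve_length_rev)
  qed
qed

lemma path_exists: "\<exists>g. simple_path g \<and> pathfinish g = pathstart g \<and> path_image g = frontier S"
proof -
  have intne: "interior S \<noteq> {}" using c_interior by auto
  have ad: "aff_dim S = aff_dim (cball (0::complex) 1)"
    using aff_dim_nonempty_interior[OF intne] aff_dim_cball[of 1 "0::complex"] by simp
  have "rel_frontier S homeomorphic rel_frontier (cball (0::complex) 1)"
    by (rule homeomorphic_rel_frontiers_convex_bounded_sets[OF cvx compact_imp_bounded[OF cpt] convex_cball bounded_cball ad])
  moreover have "rel_frontier (cball (0::complex) 1) = sphere 0 1" by simp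
  ultimately have "frontier S homeomorphic sphere (0::complex) 1"
    using rel_frontier_nonempty_interior[OF intne] by simp
  then have "sphere (0::complex) 1 homeomorphic frontier S" using homeomorphic_sym by blast
  then obtain h h' where h: "homeomorphism (sphere (0::complex) 1) (frontier S) h h'"
    by (auto simp: homeomorphic_def)
  define g where "g t = h (cis (2*pi*t))" for t
  have cis_sph: "cis x \<in> sphere 0 1" for x by simp
  have hinj: "\<And>x y. x \<in> sphere 0 1 \<Longrightarrow> y \<in> sphere 0 1 \<Longrightarrow> h x = h y \<Longrightarrow> x = y"
  proof -
    fix x y assume xy: "x \<in> sphere (0::complex) 1" "y \<in> sphere (0::complex) 1" "h x = h y"
    have "\<forall>x\<in>sphere 0 1. h' (h x) = x" using h unfolding homeomorphism_def by blast
    then show "x = y" using xy by metis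
  qed
  have path: "path g"
  proof -
    have c1: "continuous_on {0..1} (\<lambda>t. cis (2*pi*t))"
      unfolding cis_conv_exp by (intro continuous_intros)
    have c2: "continuous_on (sphere 0 1) h" using h by (simp add: homeomorphism_def)
    have "continuous_on {0..1} (\<lambda>t. h (cis (2*pi*t)))"
      by (rule continuous_on_compose2[OF c2 c1]) auto
    then show ?thesis unfolding path_def g_def .
  qed
  have loopf: "loop_free g"
    unfolding loop_free_def
  proof (intro ballI impI)
    fix x y assume xy: "x \<in> {0..1}" "y \<in> {0..1}" "g x = g y"
    then have e: "cis (2*pi*x) = cis (2*pi*y)" using hinj by (simp add: g_def)
    have key: "u < w \<Longrightarrow> u \<in> {0..1} \<Longrightarrow> w \<in> {0..1} \<Longrightarrow> cis (2*pi*u) = cis (2*pi*w) \<Longrightarrow> u = 0 \<and> w = 1" for u w :: real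
    proof -
      assume uv: "u < w" "u \<in> {0..1}" "w \<in> {0..1}" "cis (2*pi*u) = cis (2*pi*w)"
      then have "cis (2*pi*w - 2*pi*u) = 1" by (simp add: cis_divide[symmetric])
      then have "cos (2*pi*(w - u)) = 1" by (simp add: complex_eq_iff algebra_simps)
      moreover have "0 < 2*pi*(w - u)" using uv by simp
      ultimately have "\<not> 2*pi*(w - u) < 2*pi" using cis_eq_1_period by blast
      then show "u = 0 \<and> w = 1" using uv by auto
    qed
    show "x = y \<or> x = 0 \<and> y = 1 \<or> x = 1 \<and> y = 0"
      using key[of x y] key[of y x] xy e by (cases x y rule: linorder_cases) auto
  qed
  have closed: "pathfinish g = pathstart g"
    by (simp add: pathfinish_def pathstart_def g_def)
  have "(\<lambda>t. cis (2*pi*t)) ` {0..1} = sphere 0 1"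
  proof
    show "(\<lambda>t. cis (2*pi*t)) ` {0..1} \<subseteq> sphere 0 1" by auto
    show "sphere 0 1 \<subseteq> (\<lambda>t. cis (2*pi*t)) ` {0..1}"
    proof
      fix z :: complex assume "z \<in> sphere 0 1"
      then have "(Re z)\<^sup>2 + (Im z)\<^sup>2 = 1" by (simp add: cmod_def)
      then obtain a where a: "0 \<le> a" "a < 2*pi" "Re z = cos a" "Im z = sin a"
        using sincos_total_2pi by metis
      have "z = cis (2*pi*(a/(2*pi)))" using a by (simp add: complex_eq_iff)
      moreover have "a/(2*pi) \<in> {0..1}" using a by auto
      ultimately show "z \<in> (\<lambda>t. cis (2*pi*t)) ` {0..1}" by blast
    qed
  qed
  then have "path_image g = h ` sphere 0 1"
  proof -
    assume eq: "(\<lambda>t. cis (2*pi*t)) ` {0..1} = sphere 0 1"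
    have "path_image g = h ` ((\<lambda>t. cis (2*pi*t)) ` {0..1})"
      unfolding path_image_def g_def by (rule image_image[symmetric])
    then show ?thesis unfolding eq .
  qed
  also have "\<dots> = frontier S" using h by (simp add: homeomorphism_def)
  finally show ?thesis using path loopf closed by (auto simp: simple_path_def)
qed

lemma perimeter_eq: "perimeter S = I"
proof -
  let ?P = "\<lambda>g. simple_path g \<and> pathfinish g = pathstart g \<and> path_image g = frontier S"
  have "?P (SOME g. ?P g)" using path_exists by (rule someI_ex)
  then have "curve_length (SOME g. ?P g) = I" using curve_length_any by blast
  then show ?thesis using path_exists unfolding perimeter_def by simp
qed

end

context sconv
begin

lemma degenerate:
  assumes "interior S = {}"
  shows "perimeter S = I"
proof -
  obtain p where p: "p \<in> S" using ne by blast
  have fr: "frontier S = S" using assms compact_imp_closed[OF cpt] by (simp add: frontier_def)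
  have Sp: "S = {p}"
  proof
    show "S \<subseteq> {p}"
    proof
      fix q assume q: "q \<in> S"
      show "q \<in> {p}"
      proof (rule ccontr)
        assume "q \<notin> {p}"
        then have "p \<noteq> q" by simp
        moreover have "closed_segment p q \<subseteq> frontier S"
          using fr cvx p q convex_contains_segment by blast
        ultimately show False using nseg by blast
      qed
    qed
  qed (use p in auto)
  have "\<not> (\<exists>g. simple_path g \<and> pathfinish g = pathstart g \<and> path_image g = frontier S)"
  proof
    assume "\<exists>g. simple_path g \<and> pathfinish g = pathstart g \<and> path_image g = frontier S"
    then obtain g where g: "simple_path g" "path_image g = {p}" using fr Sp by auto
    have "g 0 = p" "g (1/2) = p" using g(2) by (auto simp: path_image_def)
    moreover have lf: "\<forall>x\<in>{0..1}. \<forall>y\<in>{0..1}. g x = g y \<longrightarrow> x = y \<or> x = 0 \<and> y = 1 \<or> x = 1 \<and> y = 0"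
      using g(1) unfolding simple_path_def loop_free_def by blast
    moreover have "(0::real) \<in> {0..1}" "(1/2::real) \<in> {0..1}" by auto
    ultimately have "(0::real) = 1/2 \<or> (0::real) = 0 \<and> (1/2::real) = 1 \<or> (0::real) = 1 \<and> (1/2::real) = 0"
      by (metis (no_types, lifting))
    then show False by simp
  qed
  then have "perimeter S = 0" unfolding perimeter_def by (rule if_not_P)
  moreover have "I = 0"
  proof -
    have sp: "s \<phi> = p" for \<phi> using s_prop(1)[of \<phi>] Sp by simp
    have "H = (\<lambda>\<phi>. dd p \<phi>)" by (auto simp: H_eq sp)
    then have "(H has_integral (dd p (0 + pi/2) - dd p (2*pi + pi/2))) {0..2*pi}"
      using dd_has_integral[of 0 "2*pi" p] by simp
    moreover have "dd p (2*pi + pi/2) = dd p (0 + pi/2)"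
      using dd_periodic[of p "pi/2"] by (simp add: add.commute)
    ultimately show ?thesis unfolding I_def by (simp add: integral_unique)
  qed
  ultimately show ?thesis by simp
qed

lemma perimeter_I: "perimeter S = I"
proof (cases "interior S = {}")
  case True then show ?thesis by (rule degenerate)
next
  case False
  then obtain c where c: "c \<in> interior S" by blast
  then obtain \<delta> where d: "\<delta> > 0" "cball c \<delta> \<subseteq> S" using mem_interior_cball by blast
  obtain B where B: "\<And>z. z \<in> S \<Longrightarrow> norm z \<le> B"
    using compact_imp_bounded[OF cpt] by (auto simp: bounded_iff)
  define D where "D = max 1 (B + norm c)"
  have "\<And>z. z \<in> S \<Longrightarrow> norm (z - c) \<le> D"
  proof -
    fix z assume "z \<in> S"
    then have "norm (z - c) \<le> B + norm c" using B norm_triangle_ineq4[of z c] by fastforce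
    then show "norm (z - c) \<le> D" by (simp add: D_def)
  qed
  then interpret sconvi S c \<delta> D
    by unfold_locales (use d in \<open>auto simp: D_def\<close>)
  show ?thesis by (rule perimeter_eq)
qed

end

theorem claim3:
  fixes S :: "complex set" and \<alpha> :: real
  assumes "strictly_convex S" and "S \<noteq> {}"
    and "0 < \<alpha>" and "\<alpha> < pi"
  shows "(fdist S \<alpha> has_integral perimeter S * (1 + cos \<alpha>) / sin \<alpha>) {0..2*pi}"
proof -
  interpret sconva S \<alpha> by unfold_locales (use assms in auto)
  show ?thesis using fdist_integral perimeter_I by simp
qed

end
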